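(* Let $X$ be a quasigeodesic metric space. (a) If $X$ is not coarsely equivalent to a metric space with bounded geometry, then $h_\infty(X)=\infty$. (b) Otherwise, there exists a connected graph $G$ with uniformly bounded vertex degrees which is quasi-isometric to $X$, and: (i) if $\lim_{l\to\infty}\frac1l\log\big(\sup_{v\in G}|B_G(v,l)|\big)=0$, then $h_\infty(X)=0$; (ii) if $\limsup_{l\to\infty}\frac1l\log\big(\sup_{v\in G}|B_G(v,l)|\big)>0$, then $h_\infty(X)=\infty$.
   Context: $G$ carries its path metric and $B_G(v,l)$ is the closed ball. $X$ is quasigeodesic if there are $C\ge1,A\ge0$ such that any $x,x'$ are joined by a map $p\colon[0,d(x,x')]\to X$, $p(0)=x$, $p(d(x,x'))=x'$, with $C^{-1}|s-t|-A\le d(p(s),p(t))\le C|s-t|+A$. A $(C,A)$-quasi-isometry $f\colon X\to Y$ satisfies $C^{-1}d(x,x')-A\le d(f(x),f(x'))\le Cd(x,x')+A$ and every point of $Y$ is within $A$ of $f(X)$. Bounded geometry: for every $r>0$ closed balls of radius $r$ have uniformly bounded cardinality. Coarse equivalence: a map $f$ with nondecreasing $\rho_\pm$, $\rho_-(r)\to\infty$, $\rho_-(d(x,x'))\le d(f(x),f(x'))\le\rho_+(d(x,x'))$, and coarsely dense image. Coarse entropy $h_\infty(X)=\lim_{\delta\to\infty}\lim_{R\to\infty}\limsup_{n\to\infty}\frac1n\log s(n,R,\delta,x_0)$, where $s(n,R,\delta,x_0)$ is the supremum of cardinalities of $R$-separated sets of $\delta$-paths $(x_0,\dots,x_n)$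 ($d(x_i,x_{i+1})\le\delta$) starting at $x_0$, paths compared by $\max_i d(x_i,y_i)$. *)

theory Defs
  imports "HOL-Analysis.Analysis"
begin

definition quasigeodesic :: "'a set \<Rightarrow> ('a \<Rightarrow> 'a \<Rightarrow> real) \<Rightarrow> bool" where
  "quasigeodesic S d \<longleftrightarrow> (\<exists>C A. C \<ge> 1 \<and> A \<ge> 0 \<and>
     (\<forall>x\<in>S. \<forall>x'\<in>S. \<exists>p :: real \<Rightarrow> 'a.
        p 0 = x \<and> p (d x x') = x' \<and> p ` {0..d x x'} \<subseteq> S \<and>
        (\<forall>s\<in>{0..d x x'}. \<forall>t\<in>{0..d x x'}.
            \<bar>s - t\<bar> / C - A \<le> d (p s) (p t) \<and> d (p s) (p t) \<le> C * \<bar>s - t\<bar> + A)))"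

definition quasi_isometry :: "'a set \<Rightarrow> ('a \<Rightarrow> 'a \<Rightarrow> real) \<Rightarrow> 'b set \<Rightarrow> ('b \<Rightarrow> 'b \<Rightarrow> real)
    \<Rightarrow> real \<Rightarrow> real \<Rightarrow> ('a \<Rightarrow> 'b) \<Rightarrow> bool" where
  "quasi_isometry S d T e C A f \<longleftrightarrow> f ` S \<subseteq> T \<and>
     (\<forall>x\<in>S. \<forall>x'\<in>S. d x x' / C - A \<le> e (f x) (f x') \<and> e (f x) (f x') \<le> C * d x x' + A) \<and>
     (\<forall>y\<in>T. \<exists>x\<in>S. e y (f x) \<le> A)"

definition quasi_isometric :: "'a set \<Rightarrow> ('a \<Rightarrow> 'a \<Rightarrow> real) \<Rightarrow> 'b set \<Rightarrow> ('b \<Rightarrow> 'b \<Rightarrow> real) \<Rightarrow> bool" where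
  "quasi_isometric S d T e \<longleftrightarrow> (\<exists>C A f. C \<ge> 1 \<and> A \<ge> 0 \<and> quasi_isometry S d T e C A f)"

definition bounded_geometry :: "'a set \<Rightarrow> ('a \<Rightarrow> 'a \<Rightarrow> real) \<Rightarrow> bool" where
  "bounded_geometry S d \<longleftrightarrow> (\<forall>r>0. \<exists>N::nat. \<forall>x\<in>S.
      finite {y\<in>S. d x y \<le> r} \<and> card {y\<in>S. d x y \<le> r} \<le> N)"

definition coarse_equivalence :: "'a set \<Rightarrow> ('a \<Rightarrow> 'a \<Rightarrow> real) \<Rightarrow> 'b set \<Rightarrow> ('b \<Rightarrow> 'b \<Rightarrow> real)
    \<Rightarrow> ('a \<Rightarrow> 'b) \<Rightarrow> bool" where
  "coarse_equivalence S d T e f \<longleftrightarrow> f ` S \<subseteq> T \<and>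
     (\<exists>\<rho>m \<rho>p :: real \<Rightarrow> real. mono \<rho>m \<and> mono \<rho>p \<and> filterlim \<rho>m at_top at_top \<and>
        (\<forall>x\<in>S. \<forall>x'\<in>S. \<rho>m (d x x') \<le> e (f x) (f x') \<and> e (f x) (f x') \<le> \<rho>p (d x x'))) \<and>
     (\<exists>R. \<forall>y\<in>T. \<exists>x\<in>S. e y (f x) \<le> R)"

text \<open>Every metric space with bounded geometry is countable (it is the union of the
  finite balls of radius n around a point), so it suffices to let the target range over
  metric spaces whose carrier is a subset of nat.\<close>
definition coarsely_bounded_geometry :: "'a set \<Rightarrow> ('a \<Rightarrow> 'a \<Rightarrow> real) \<Rightarrow> bool" where
  "coarsely_bounded_geometry S d \<longleftrightarrow> (\<exists>(T::nat set) e f.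
      Metric_space T e \<and> bounded_geometry T e \<and> coarse_equivalence S d T e f)"

definition simple_graph :: "nat set \<Rightarrow> (nat \<Rightarrow> nat \<Rightarrow> bool) \<Rightarrow> bool" where
  "simple_graph V E \<longleftrightarrow> (\<forall>u v. E u v \<longrightarrow> u \<in> V \<and> v \<in> V \<and> E v u \<and> u \<noteq> v)"

definition gwalk :: "nat set \<Rightarrow> (nat \<Rightarrow> nat \<Rightarrow> bool) \<Rightarrow> nat \<Rightarrow> nat \<Rightarrow> nat \<Rightarrow> bool" where
  "gwalk V E u v n \<longleftrightarrow> (\<exists>p :: nat \<Rightarrow> nat. p 0 = u \<and> p n = v \<and>
      (\<forall>i\<le>n. p i \<in> V) \<and> (\<forall>i<n. E (p i) (p (Suc i))))"

definition graph_connected :: "nat set \<Rightarrow> (nat \<Rightarrow> nat \<Rightarrow> bool) \<Rightarrow> bool" where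
  "graph_connected V E \<longleftrightarrow> V \<noteq> {} \<and> (\<forall>u\<in>V. \<forall>v\<in>V. \<exists>n. gwalk V E u v n)"

definition gdist :: "nat set \<Rightarrow> (nat \<Rightarrow> nat \<Rightarrow> bool) \<Rightarrow> nat \<Rightarrow> nat \<Rightarrow> real" where
  "gdist V E u v = real (LEAST n. gwalk V E u v n)"

definition bounded_degree :: "nat set \<Rightarrow> (nat \<Rightarrow> nat \<Rightarrow> bool) \<Rightarrow> bool" where
  "bounded_degree V E \<longleftrightarrow> (\<exists>D::nat. \<forall>v\<in>V. finite {w\<in>V. E v w} \<and> card {w\<in>V. E v w} \<le> D)"

definition gball :: "nat set \<Rightarrow> (nat \<Rightarrow> nat \<Rightarrow> bool) \<Rightarrow> nat \<Rightarrow> real \<Rightarrow> nat set" where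
  "gball V E v l = {w\<in>V. gdist V E v w \<le> l}"

definition growth :: "nat set \<Rightarrow> (nat \<Rightarrow> nat \<Rightarrow> bool) \<Rightarrow> nat \<Rightarrow> real" where
  "growth V E l = (SUP v\<in>V. real (card (gball V E v (real l))))"

definition delta_paths :: "'a set \<Rightarrow> ('a \<Rightarrow> 'a \<Rightarrow> real) \<Rightarrow> nat \<Rightarrow> real \<Rightarrow> 'a \<Rightarrow> (nat \<Rightarrow> 'a) set" where
  "delta_paths S d n \<delta> x0 = {p \<in> {0..n} \<rightarrow>\<^sub>E S. p 0 = x0 \<and> (\<forall>i<n. d (p i) (p (Suc i)) \<le> \<delta>)}"

definition path_dist :: "('a \<Rightarrow> 'a \<Rightarrow> real) \<Rightarrow> nat \<Rightarrow> (nat \<Rightarrow> 'a) \<Rightarrow> (nat \<Rightarrow> 'a) \<Rightarrow> real" where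
  "path_dist d n p q = (MAX i\<in>{0..n}. d (p i) (q i))"

definition separated_count :: "'a set \<Rightarrow> ('a \<Rightarrow> 'a \<Rightarrow> real) \<Rightarrow> nat \<Rightarrow> real \<Rightarrow> real \<Rightarrow> 'a \<Rightarrow> ereal" where
  "separated_count S d n R \<delta> x0 = (SUP P \<in> {P. P \<subseteq> delta_paths S d n \<delta> x0 \<and> finite P \<and>
        (\<forall>p\<in>P. \<forall>q\<in>P. p \<noteq> q \<longrightarrow> path_dist d n p q > R)}. ereal (real (card P)))"

definition eln :: "ereal \<Rightarrow> ereal" where
  "eln s = (if s = \<infinity> then \<infinity> else ereal (ln (real_of_ereal s)))"

definition coarse_entropy :: "'a set \<Rightarrow> ('a \<Rightarrow> 'a \<Rightarrow> real) \<Rightarrow> 'a \<Rightarrow> ereal" where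
  "coarse_entropy S d x0 = Lim at_top (\<lambda>\<delta>::real. Lim at_top (\<lambda>R::real.
      limsup (\<lambda>n::nat. eln (separated_count S d n R \<delta> x0) / ereal (real n))))"

end

theory Submission
  imports Defs "HOL-Real_Asymp.Real_Asymp"
begin

definition ent :: "'a set \<Rightarrow> ('a \<Rightarrow> 'a \<Rightarrow> real) \<Rightarrow> real \<Rightarrow> real \<Rightarrow> 'a \<Rightarrow> ereal" where
 "ent S d \<delta> R x0 = limsup (\<lambda>n::nat. eln (separated_count S d n R \<delta> x0) / ereal (real n))"

lemma coarse_entropy_ent: "coarse_entropy S d x0 = Lim at_top (\<lambda>\<delta>. Lim at_top (\<lambda>R. ent S d \<delta> R x0))"
  unfolding coarse_entropy_def ent_def by simp

lemma sc_ge: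
  assumes "P \<subseteq> delta_paths S d n \<delta> x0" "finite P" "\<forall>p\<in>P. \<forall>q\<in>P. p \<noteq> q \<longrightarrow> path_dist d n p q > R"
  shows "ereal (real (card P)) \<le> separated_count S d n R \<delta> x0"
  unfolding separated_count_def by (rule SUP_upper) (use assms in auto)

lemma sc_le:
  assumes "\<And>P. P \<subseteq> delta_paths S d n \<delta> x0 \<Longrightarrow> finite P \<Longrightarrow> (\<forall>p\<in>P. \<forall>q\<in>P. p \<noteq> q \<longrightarrow> path_dist d n p q > R) \<Longrightarrow> real (card P) \<le> K"
  shows "separated_count S d n R \<delta> x0 \<le> ereal K"
  unfolding separated_count_def by (rule SUP_least) (use assms in auto)

lemma sc_anti:
  assumes "R \<le> R'"
  shows "separated_count S d n R' \<delta> x0 \<le> separated_count S d n R \<delta> x0"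
  unfolding separated_count_def by (rule SUP_subset_mono) (use assms in force)+

lemma sc_ge1:
  assumes "Metric_space S d" "x0 \<in> S" "\<delta> \<ge> 0"
  shows "1 \<le> separated_count S d n R \<delta> x0"
proof -
  let ?p = "\<lambda>i\<in>{0..n}. x0"
  have "d x0 x0 = 0" using Metric_space.zero[OF assms(1)] assms(2) by auto
  then have "?p \<in> delta_paths S d n \<delta> x0" using assms unfolding delta_paths_def by auto
  then have "ereal (real (card {?p})) \<le> separated_count S d n R \<delta> x0"
    by (intro sc_ge) auto
  then show ?thesis by (simp add: one_ereal_def)
qed

lemma eln_ge: assumes "1 \<le> c" "ereal c \<le> s" shows "ereal (ln c) \<le> eln s"
proof (cases s)
  case (real r)
  then show ?thesis using assms by (simp add: eln_def)
qed (use assms in \<open>auto simp: eln_def\<close>)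

lemma eln_le: assumes "1 \<le> s" "s \<le> ereal b" shows "eln s \<le> ereal (ln b)"
proof (cases s)
  case (real r)
  then show ?thesis using assms by (simp add: eln_def)
qed (use assms in \<open>auto simp: eln_def\<close>)

lemma ereal_div_nonneg: "0 \<le> (x::ereal) \<Longrightarrow> 0 < r \<Longrightarrow> 0 \<le> x / ereal r"
  by (cases x) auto

lemma ent_nonneg:
  assumes "Metric_space S d" "x0 \<in> S" "\<delta> \<ge> 0"
  shows "0 \<le> ent S d \<delta> R x0"
  unfolding ent_def
proof (rule le_Limsup)
  show "\<forall>\<^sub>F n in sequentially. 0 \<le> eln (separated_count S d n R \<delta> x0) / ereal (real n)"
  proof (rule eventually_sequentiallyI[of 1])
    fix n :: nat assume "1 \<le> n"
    have "ereal (ln 1) \<le> eln (separated_count S d n R \<delta> x0)"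
      using sc_ge1[OF assms] by (intro eln_ge) (auto simp: one_ereal_def)
    then show "0 \<le> eln (separated_count S d n R \<delta> x0) / ereal (real n)"
      using \<open>1 \<le> n\<close> by (intro ereal_div_nonneg) (auto simp: zero_ereal_def)
  qed
qed simp


lemma ereal_div_mono: "(x::ereal) \<le> y \<Longrightarrow> 0 < r \<Longrightarrow> x / ereal r \<le> y / ereal r"
  by (cases x; cases y) (auto simp: divide_right_mono)

lemma ereal_div_real: "r \<noteq> 0 \<Longrightarrow> ereal c / ereal r = ereal (c / r)"
  by simp

lemma nat_div_lower: "(m::nat) > 0 \<Longrightarrow> real n / real m - 1 \<le> real (n div m)"
proof -
  assume m: "m > 0"
  have "n = m * (n div m) + n mod m" by simp
  then have "real n = real m * real (n div m) + real (n mod m)" by (metis of_nat_add of_nat_mult)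
  moreover have "real (n mod m) < real m" using m by simp
  ultimately have "real n < real m * (real (n div m) + 1)" by (simp add: algebra_simps)
  then show ?thesis using m by (simp add: field_simps)
qed

lemma nat_div_upper: "(m::nat) > 0 \<Longrightarrow> real (n div m) \<le> real n / real m"
proof -
  assume m: "m > 0"
  have "m * (n div m) \<le> n" by simp
  then have "real m * real (n div m) \<le> real n" by (metis of_nat_le_iff of_nat_mult)
  then show ?thesis using m by (simp add: field_simps)
qed

lemma ent_lb:
  assumes ms: "Metric_space S d" and x0: "x0 \<in> S" and "\<delta> \<ge> 0" and N: "N \<ge> 1" and m: "m > 0"
    and hyp: "\<forall>n\<ge>n0. ereal (real N ^ ((n - n0) div m)) \<le> separated_count S d n R \<delta> x0"
  shows "ereal (ln (real N) / real m) \<le> ent S d \<delta> R x0"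
proof -
  define lower where "lower n = ((real n - real n0) / real m - 1) * ln (real N) / real n" for n :: nat
  have "lower \<longlonglongrightarrow> inverse (real m) * ln (real N)"
    unfolding lower_def using m by real_asymp
  then have "lower \<longlonglongrightarrow> ln (real N) / real m" by (simp add: field_simps)
  then have "(\<lambda>n. ereal (lower n)) \<longlonglongrightarrow> ereal (ln (real N) / real m)"
    by (rule tendsto_ereal)
  then have L: "limsup (\<lambda>n. ereal (lower n)) = ereal (ln (real N) / real m)"
    by (intro lim_imp_Limsup) auto
  have lnN: "ln (real N) \<ge> 0" using N by simp
  have "\<forall>\<^sub>F n in sequentially. ereal (lower n) \<le> eln (separated_count S d n R \<delta> x0) / ereal (real n)"
  proof (rule eventually_sequentiallyI[of "max n0 1"])
    fix n :: nat assume n: "max n0 1 \<le> n"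
    define q where "q = (n - n0) div m"
    have q: "real (n - n0) / real m - 1 \<le> real q" unfolding q_def using nat_div_lower[OF m] .
    have "real (n - n0) = real n - real n0" using n by simp
    with q have "(real n - real n0) / real m - 1 \<le> real q" by simp
    then have A: "((real n - real n0) / real m - 1) * ln (real N) \<le> real q * ln (real N)"
      using lnN by (intro mult_right_mono) auto
    have "ereal (ln (real N ^ q)) \<le> eln (separated_count S d n R \<delta> x0)"
      using hyp n N unfolding q_def by (intro eln_ge) auto
    then have B: "ereal (real q * ln (real N)) \<le> eln (separated_count S d n R \<delta> x0)"
      using N by (simp add: ln_realpow)
    have "ereal (lower n) \<le> ereal (real q * ln (real N) / real n)"
      unfolding lower_def using A n by (intro ereal_less_eq(3)[THEN iffD2] divide_right_mono) auto
    also have "\<dots> = ereal (real q * ln (real N)) / ereal (real n)" using n by simp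
    also have "\<dots> \<le> eln (separated_count S d n R \<delta> x0) / ereal (real n)"
      using B n by (intro ereal_div_mono) auto
    finally show "ereal (lower n) \<le> eln (separated_count S d n R \<delta> x0) / ereal (real n)" .
  qed
  then have "limsup (\<lambda>n. ereal (lower n)) \<le> ent S d \<delta> R x0"
    unfolding ent_def by (rule Limsup_mono)
  with L show ?thesis by simp
qed

lemma ent_ub:
  assumes ms: "Metric_space S d" and x0: "x0 \<in> S" and "\<delta> \<ge> 0" and B: "B \<ge> 1" and k: "k > 0"
    and hyp: "\<forall>n\<ge>1. separated_count S d n R \<delta> x0 \<le> ereal (B ^ (n div k + 1))"
  shows "ent S d \<delta> R x0 \<le> ereal (ln B / real k)"
proof -
  define upper where "upper n = (real n / real k + 1) * ln B / real n" for n :: nat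
  have "upper \<longlonglongrightarrow> inverse (real k) * ln B"
    unfolding upper_def using k by real_asymp
  then have "upper \<longlonglongrightarrow> ln B / real k" by (simp add: field_simps)
  then have "(\<lambda>n. ereal (upper n)) \<longlonglongrightarrow> ereal (ln B / real k)"
    by (rule tendsto_ereal)
  then have L: "limsup (\<lambda>n. ereal (upper n)) = ereal (ln B / real k)"
    by (intro lim_imp_Limsup) auto
  have lnB: "ln B \<ge> 0" using B by simp
  have "\<forall>\<^sub>F n in sequentially. eln (separated_count S d n R \<delta> x0) / ereal (real n) \<le> ereal (upper n)"
  proof (rule eventually_sequentiallyI[of 1])
    fix n :: nat assume n: "1 \<le> n"
    define q where "q = n div k + 1"
    have q: "real q \<le> real n / real k + 1" unfolding q_def using nat_div_upper[OF k] by simp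
    have "eln (separated_count S d n R \<delta> x0) \<le> ereal (ln (B ^ q))"
      using hyp n B sc_ge1[OF ms x0 \<open>\<delta> \<ge> 0\<close>] unfolding q_def by (intro eln_le) auto
    then have A: "eln (separated_count S d n R \<delta> x0) \<le> ereal (real q * ln B)"
      using B by (simp add: ln_realpow)
    have "eln (separated_count S d n R \<delta> x0) / ereal (real n) \<le> ereal (real q * ln B) / ereal (real n)"
      using A n by (intro ereal_div_mono) auto
    also have "\<dots> = ereal (real q * ln B / real n)" using n by simp
    also have "\<dots> \<le> ereal (upper n)"
      unfolding upper_def using q n lnB by (intro ereal_less_eq(3)[THEN iffD2] divide_right_mono mult_right_mono) auto
    finally show "eln (separated_count S d n R \<delta> x0) / ereal (real n) \<le> ereal (upper n)" .
  qed
  then have "ent S d \<delta> R x0 \<le> limsup (\<lambda>n. ereal (upper n))"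
    unfolding ent_def by (rule Limsup_mono)
  with L show ?thesis by simp
qed


lemma eln_mono: assumes "1 \<le> a" "a \<le> b" shows "eln a \<le> eln b"
proof (cases a)
  case (real r)
  show ?thesis
  proof (cases b)
    case (real s)
    then show ?thesis using assms \<open>a = ereal r\<close> by (simp add: eln_def)
  qed (use assms \<open>a = ereal r\<close> in \<open>auto simp: eln_def\<close>)
qed (use assms in \<open>auto simp: eln_def\<close>)

lemma ent_anti:
  assumes ms: "Metric_space S d" and x0: "x0 \<in> S" and "\<delta> \<ge> 0" and "R \<le> R'"
  shows "ent S d \<delta> R' x0 \<le> ent S d \<delta> R x0"
  unfolding ent_def
proof (rule Limsup_mono, rule eventually_sequentiallyI[of 1])
  fix n :: nat assume "1 \<le> n"
  show "eln (separated_count S d n R' \<delta> x0) / ereal (real n) \<le> eln (separated_count S d n R \<delta> x0) / ereal (real n)"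
    using \<open>1 \<le> n\<close> sc_ge1[OF ms x0 \<open>\<delta> \<ge> 0\<close>] sc_anti[OF \<open>R \<le> R'\<close>]
    by (intro ereal_div_mono eln_mono) auto
qed

lemma tendsto_antitone_ereal:
  fixes f :: "real \<Rightarrow> ereal"
  assumes "\<And>x y. x0 \<le> x \<Longrightarrow> x \<le> y \<Longrightarrow> f y \<le> f x"
  shows "(f \<longlongrightarrow> (INF x\<in>{x0..}. f x)) at_top"
proof (rule order_tendstoI)
  fix a assume "(INF x\<in>{x0..}. f x) < a"
  then obtain x where x: "x \<in> {x0..}" "f x < a" by (auto simp: INF_less_iff)
  show "\<forall>\<^sub>F y in at_top. f y < a"
    using x assms by (intro eventually_at_top_linorderI[of x]) (auto intro: le_less_trans)
next
  fix a assume "a < (INF x\<in>{x0..}. f x)"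
  then have "\<forall>x\<ge>x0. a < f x" using less_INF_D by fastforce
  then show "\<forall>\<^sub>F y in at_top. a < f y" by (intro eventually_at_top_linorderI[of x0]) auto
qed

lemma Lim_eventually_const:
  fixes f :: "real \<Rightarrow> ereal"
  assumes "\<forall>\<^sub>F x in at_top. f x = c"
  shows "Lim at_top f = c"
  by (rule tendsto_Lim) (auto intro: tendsto_eventually[OF assms])

lemma entropy_inf:
  assumes "\<forall>\<delta>\<ge>\<delta>0. \<forall>R\<ge>R0. ent S d \<delta> R x0 = \<infinity>"
  shows "coarse_entropy S d x0 = \<infinity>"
  unfolding coarse_entropy_ent
  by (rule Lim_eventually_const, rule eventually_at_top_linorderI[of \<delta>0],
      rule Lim_eventually_const, rule eventually_at_top_linorderI[of R0]) (use assms in auto)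

lemma entropy_zero:
  assumes "\<forall>\<delta>\<ge>\<delta>0. ((\<lambda>R. ent S d \<delta> R x0) \<longlongrightarrow> 0) at_top"
  shows "coarse_entropy S d x0 = 0"
  unfolding coarse_entropy_ent
  by (rule Lim_eventually_const, rule eventually_at_top_linorderI[of \<delta>0],
      rule tendsto_Lim) (use assms in auto)

lemma entropy_inf2:
  assumes ms: "Metric_space S d" and x0: "x0 \<in> S" and "\<delta>0 \<ge> 0"
    and c: "filterlim c at_top at_top"
    and lb: "\<forall>\<delta>\<ge>\<delta>0. \<forall>R\<ge>R0. ereal (c \<delta>) \<le> ent S d \<delta> R x0"
  shows "coarse_entropy S d x0 = \<infinity>"
  unfolding coarse_entropy_ent
proof (rule tendsto_Lim, simp, unfold tendsto_PInfty, intro allI)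
  fix r :: real
  have "\<forall>\<^sub>F \<delta> in at_top. c \<delta> > r" using c by (simp add: filterlim_at_top_dense)
  moreover have "\<forall>\<^sub>F \<delta> in at_top. \<delta> \<ge> \<delta>0" by (rule eventually_ge_at_top)
  ultimately show "\<forall>\<^sub>F \<delta> in at_top. ereal r < Lim at_top (\<lambda>R. ent S d \<delta> R x0)"
  proof eventually_elim
    case (elim \<delta>)
    have "\<delta> \<ge> 0" using elim \<open>\<delta>0 \<ge> 0\<close> by simp
    have T: "((\<lambda>R. ent S d \<delta> R x0) \<longlongrightarrow> (INF R\<in>{R0..}. ent S d \<delta> R x0)) at_top"
      by (rule tendsto_antitone_ereal) (rule ent_anti[OF ms x0 \<open>\<delta> \<ge> 0\<close>])
    have "ereal (c \<delta>) \<le> (INF R\<in>{R0..}. ent S d \<delta> R x0)"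
      using lb elim by (intro INF_greatest) auto
    moreover have "Lim at_top (\<lambda>R. ent S d \<delta> R x0) = (INF R\<in>{R0..}. ent S d \<delta> R x0)"
      by (rule tendsto_Lim[OF _ T]) simp
    ultimately show ?case using elim by (metis ereal_less_eq(3) less_le_trans not_le)
  qed
qed


definition qg :: "real \<Rightarrow> real \<Rightarrow> 'a set \<Rightarrow> ('a \<Rightarrow> 'a \<Rightarrow> real) \<Rightarrow> bool" where
  "qg C A X d \<longleftrightarrow> C \<ge> 1 \<and> A \<ge> 0 \<and> (\<forall>x\<in>X. \<forall>x'\<in>X. \<exists>p :: real \<Rightarrow> 'a.
        p 0 = x \<and> p (d x x') = x' \<and> p ` {0..d x x'} \<subseteq> X \<and>
        (\<forall>s\<in>{0..d x x'}. \<forall>t\<in>{0..d x x'}.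
            \<bar>s - t\<bar> / C - A \<le> d (p s) (p t) \<and> d (p s) (p t) \<le> C * \<bar>s - t\<bar> + A))"

lemma quasigeodesic_qg: "quasigeodesic X d \<longleftrightarrow> (\<exists>C A. qg C A X d)"
  unfolding quasigeodesic_def qg_def by blast

lemma jump:
  assumes ms: "Metric_space X d" and q: "qg C A X d" and x: "x \<in> X" and z: "z \<in> X"
    and \<delta>: "\<delta> > A" and L: "real L \<ge> d x z / ((\<delta> - A) / C)"
  shows "\<exists>f. f 0 = x \<and> (\<forall>j\<ge>L. f j = z) \<and> (\<forall>j. f j \<in> X) \<and> (\<forall>j. d (f j) (f (Suc j)) \<le> \<delta>)"
proof -
  define h where "h = (\<delta> - A) / C"
  define D where "D = d x z"
  have C: "C \<ge> 1" and A: "A \<ge> 0" using q unfolding qg_def by auto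
  have h: "h > 0" unfolding h_def using C \<delta> by auto
  have D: "D \<ge> 0" unfolding D_def using Metric_space.nonneg[OF ms] by auto
  obtain p where p0: "p 0 = x" and pD: "p D = z" and pX: "p ` {0..D} \<subseteq> X"
    and pd: "\<forall>s\<in>{0..D}. \<forall>t\<in>{0..D}. d (p s) (p t) \<le> C * \<bar>s - t\<bar> + A"
  proof -
    have "\<forall>x\<in>X. \<forall>x'\<in>X. \<exists>p :: real \<Rightarrow> 'a.
        p 0 = x \<and> p (d x x') = x' \<and> p ` {0..d x x'} \<subseteq> X \<and>
        (\<forall>s\<in>{0..d x x'}. \<forall>t\<in>{0..d x x'}.
            \<bar>s - t\<bar> / C - A \<le> d (p s) (p t) \<and> d (p s) (p t) \<le> C * \<bar>s - t\<bar> + A)"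
      using q unfolding qg_def by blast
    from this[rule_format, OF x z] obtain p where "p 0 = x \<and> p D = z \<and> p ` {0..D} \<subseteq> X \<and>
        (\<forall>s\<in>{0..D}. \<forall>t\<in>{0..D}. \<bar>s - t\<bar> / C - A \<le> d (p s) (p t) \<and> d (p s) (p t) \<le> C * \<bar>s - t\<bar> + A)"
      unfolding D_def by blast
    then show ?thesis using that by blast
  qed
  define f where "f j = p (min (real j * h) D)" for j :: nat
  have "f 0 = x" unfolding f_def using p0 D by simp
  moreover have "\<forall>j\<ge>L. f j = z"
  proof (intro allI impI)
    fix j assume "L \<le> j"
    have "D / h \<le> real L" using L unfolding h_def D_def .
    then have "D \<le> real L * h" using h by (simp add: divide_le_eq)
    also have "\<dots> \<le> real j * h" using \<open>L \<le> j\<close> h by (intro mult_right_mono) auto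
    finally show "f j = z" unfolding f_def using pD by simp
  qed
  moreover have "\<forall>j. f j \<in> X" unfolding f_def using pX h D by (auto intro!: imageI)
  moreover have "\<forall>j. d (f j) (f (Suc j)) \<le> \<delta>"
  proof
    fix j
    let ?s = "min (real j * h) D" and ?t = "min (real (Suc j) * h) D"
    have st: "\<bar>?s - ?t\<bar> \<le> h" using h by (auto simp: min_def algebra_simps)
    have "d (f j) (f (Suc j)) \<le> C * \<bar>?s - ?t\<bar> + A"
      unfolding f_def using pd h D by (intro pd[rule_format]) auto
    also have "\<dots> \<le> C * h + A" using st C by (intro add_right_mono mult_left_mono) auto
    also have "\<dots> = \<delta>" unfolding h_def using C by simp
    finally show "d (f j) (f (Suc j)) \<le> \<delta>" .
  qed
  ultimately show ?thesis by blast
qed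

lemma path_dist_ge:
  assumes "t \<le> n"
  shows "d (p t) (q t) \<le> path_dist d n p q"
  unfolding path_dist_def using assms by (intro Max_ge) auto

lemma Suc_divmod:
  assumes "(m::nat) > 0"
  shows "Suc s mod m = (if Suc (s mod m) = m then 0 else Suc (s mod m))"
    and "Suc s div m = (if Suc (s mod m) = m then Suc (s div m) else s div m)"
  using assms by (auto simp: mod_Suc div_Suc)


lemma real_nat_ceiling_ge: "t \<le> real (nat \<lceil>t\<rceil>)"
  by linarith

lemma many_points_ent:
  assumes ms: "Metric_space X d" and q: "qg C A X d" and x0: "x0 \<in> X" and x: "x \<in> X"
    and Zf: "finite Z" and ZX: "Z \<subseteq> X" and Z1: "card Z \<ge> 1"
    and Z\<rho>: "\<forall>z\<in>Z. d x z \<le> \<rho>" and Zsep: "\<forall>z\<in>Z. \<forall>z'\<in>Z. z \<noteq> z' \<longrightarrow> d z z' > R"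
    and R: "R \<ge> 0" and \<delta>: "\<delta> > A"
  shows "ereal (ln (real (card Z)) / real (2 * (nat \<lceil>\<rho> / ((\<delta> - A) / C)\<rceil> + 1))) \<le> ent X d \<delta> R x0"
proof -
  define h where "h = (\<delta> - A) / C"
  define L where "L = nat \<lceil>\<rho> / h\<rceil> + 1"
  define L0 where "L0 = nat \<lceil>d x0 x / h\<rceil> + 1"
  define N where "N = card Z"
  have C: "C \<ge> 1" and A: "A \<ge> 0" using q unfolding qg_def by auto
  have h: "h > 0" unfolding h_def using C \<delta> by auto
  have \<delta>0: "\<delta> \<ge> 0" using A \<delta> by simp
  have L1: "L \<ge> 1" and L01: "L0 \<ge> 1" unfolding L_def L0_def by auto
  obtain q0 where q00: "q0 0 = x0" and q0L: "\<forall>j\<ge>L0. q0 j = x" and q0X: "\<forall>j. q0 j \<in> X"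
    and q0d: "\<forall>j. d (q0 j) (q0 (Suc j)) \<le> \<delta>"
  proof -
    have "d x0 x / h \<le> real L0" unfolding L0_def using real_nat_ceiling_ge[of "d x0 x / h"] by simp
    then show ?thesis using jump[OF ms q x0 x \<delta>, of L0] that unfolding h_def by blast
  qed
  have Lz: "d x z / h \<le> real L" if "z \<in> Z" for z
  proof -
    have "d x z / h \<le> \<rho> / h" using Z\<rho> that h by (simp add: divide_right_mono)
    also have "\<dots> \<le> real L" unfolding L_def using real_nat_ceiling_ge[of "\<rho> / h"] by simp
    finally show ?thesis .
  qed
  have "\<forall>z\<in>Z. \<exists>f. f 0 = x \<and> (\<forall>j\<ge>L. f j = z) \<and> (\<forall>j. f j \<in> X) \<and> (\<forall>j. d (f j) (f (Suc j)) \<le> \<delta>)"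
    using jump[OF ms q x _ \<delta>] Lz ZX unfolding h_def by blast
  then obtain out where out: "\<And>z. z \<in> Z \<Longrightarrow> out z 0 = x \<and> (\<forall>j\<ge>L. out z j = z) \<and> (\<forall>j. out z j \<in> X) \<and> (\<forall>j. d (out z j) (out z (Suc j)) \<le> \<delta>)"
    by metis
  have "\<forall>z\<in>Z. \<exists>f. f 0 = z \<and> (\<forall>j\<ge>L. f j = x) \<and> (\<forall>j. f j \<in> X) \<and> (\<forall>j. d (f j) (f (Suc j)) \<le> \<delta>)"
  proof
    fix z assume z: "z \<in> Z"
    have "d z x / h \<le> real L" using Lz[OF z] Metric_space.commute[OF ms] by simp
    then show "\<exists>f. f 0 = z \<and> (\<forall>j\<ge>L. f j = x) \<and> (\<forall>j. f j \<in> X) \<and> (\<forall>j. d (f j) (f (Suc j)) \<le> \<delta>)"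
      using jump[OF ms q _ x \<delta>] z ZX unfolding h_def by blast
  qed
  then obtain bk where bk: "\<And>z. z \<in> Z \<Longrightarrow> bk z 0 = z \<and> (\<forall>j\<ge>L. bk z j = x) \<and> (\<forall>j. bk z j \<in> X) \<and> (\<forall>j. d (bk z j) (bk z (Suc j)) \<le> \<delta>)"
    by metis
  obtain zz where zz: "bij_betw zz {0..<N} Z" unfolding N_def using ex_bij_betw_nat_finite[OF Zf] by blast
  have N1: "N \<ge> 1" unfolding N_def using Z1 .
  define zw where "zw w i = zz (if w i < N then w i else 0)" for w :: "nat \<Rightarrow> nat" and i
  have zwZ: "zw w i \<in> Z" for w i unfolding zw_def using zz N1 by (auto simp: bij_betw_def)
  define seg where "seg w i r = (if r < L then out (zw w i) r else bk (zw w i) (r - L))" for w i r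
  define P where "P w t = (if t < L0 then q0 t else seg w ((t - L0) div (2*L)) ((t - L0) mod (2*L)))" for w t
  have segX: "seg w i r \<in> X" for w i r unfolding seg_def using out[OF zwZ] bk[OF zwZ] by auto
  have PX: "P w t \<in> X" for w t unfolding P_def using q0X segX by auto
  have P0: "P w 0 = x0" for w unfolding P_def using L01 q00 by auto
  have seg0: "seg w i 0 = x" for w i unfolding seg_def using out[OF zwZ] L1 by auto
  have segstep: "d (seg w i r) (seg w i (Suc r)) \<le> \<delta>" if "Suc r < 2 * L" for w i r
  proof -
    have o: "out (zw w i) 0 = x \<and> (\<forall>j\<ge>L. out (zw w i) j = zw w i) \<and> (\<forall>j. d (out (zw w i) j) (out (zw w i) (Suc j)) \<le> \<delta>)"
      using out[OF zwZ] by blast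
    have b: "bk (zw w i) 0 = zw w i \<and> (\<forall>j. d (bk (zw w i) j) (bk (zw w i) (Suc j)) \<le> \<delta>)"
      using bk[OF zwZ] by blast
    consider "Suc r < L" | "Suc r = L" | "L \<le> r" by linarith
    then show ?thesis
    proof cases
      case 1 then show ?thesis unfolding seg_def using o by auto
    next
      case 2
      then have "seg w i (Suc r) = out (zw w i) (Suc r)" unfolding seg_def using o b by auto
      moreover have "seg w i r = out (zw w i) r" unfolding seg_def using 2 by auto
      ultimately show ?thesis using o by auto
    next
      case 3
      then have "Suc r - L = Suc (r - L)" by auto
      then show ?thesis unfolding seg_def using 3 b by auto
    qed
  qed
  have seglast: "d (seg w i r) (seg w (Suc i) 0) \<le> \<delta>" if "Suc r = 2 * L" for w i r
  proof -
    have b: "(\<forall>j\<ge>L. bk (zw w i) j = x) \<and> (\<forall>j. d (bk (zw w i) j) (bk (zw w i) (Suc j)) \<le> \<delta>)"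
      using bk[OF zwZ] by blast
    have "r \<ge> L" "Suc (r - L) = L" using that L1 by auto
    then have "seg w i r = bk (zw w i) (r - L)" "bk (zw w i) (Suc (r - L)) = x"
      unfolding seg_def using b by auto
    then show ?thesis using b seg0 by metis
  qed
  have Pstep: "d (P w t) (P w (Suc t)) \<le> \<delta>" for w t
  proof -
    consider "Suc t < L0" | "Suc t = L0" | "L0 \<le> t" by linarith
    then show ?thesis
    proof cases
      case 1 then show ?thesis unfolding P_def using q0d by auto
    next
      case 2
      then have "P w (Suc t) = x" unfolding P_def using seg0 by auto
      moreover have "P w t = q0 t" unfolding P_def using 2 by auto
      moreover have "q0 (Suc t) = x" using q0L 2 by auto
      ultimately show ?thesis using q0d by metis
    next
      case 3
      define s where "s = t - L0"
      have ts: "Suc t - L0 = Suc s" unfolding s_def using 3 by auto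
      have m: "2 * L > 0" using L1 by auto
      have Pt: "P w t = seg w (s div (2*L)) (s mod (2*L))" unfolding P_def s_def using 3 by auto
      have PSt: "P w (Suc t) = seg w (Suc s div (2*L)) (Suc s mod (2*L))" unfolding P_def ts[symmetric] using 3 by auto
      show ?thesis
      proof (cases "Suc (s mod (2*L)) = 2*L")
        case True
        then show ?thesis unfolding Pt PSt Suc_divmod[OF m] using seglast by simp
      next
        case False
        have "Suc (s mod (2*L)) < 2*L" using False m by (meson Suc_lessI mod_less_divisor)
        then show ?thesis unfolding Pt PSt Suc_divmod[OF m] using False segstep by simp
      qed
    qed
  qed
  have Pmid: "P w (L0 + 2 * L * i + L) = zw w i" for w i
  proof -
    have "(2 * L * i + L) div (2 * L) = i" "(2 * L * i + L) mod (2 * L) = L" using L1 by auto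
    then show ?thesis unfolding P_def seg_def using bk[OF zwZ] by simp
  qed
  have zzinj: "inj_on zz {0..<N}" using zz by (auto simp: bij_betw_def)
  have count: "ereal (real N ^ ((n - L0) div (2 * L))) \<le> separated_count X d n R \<delta> x0" if n: "n \<ge> L0" for n
  proof -
    define k where "k = (n - L0) div (2 * L)"
    define W where "W = {0..<k} \<rightarrow>\<^sub>E {0..<N}"
    define rp where "rp w = restrict (P w) {0..n}" for w
    have sep: "path_dist d n (rp w) (rp w') > R" if w: "w \<in> W" "w' \<in> W" "w \<noteq> w'" for w w'
    proof -
      obtain i where i: "i < k" "w i \<noteq> w' i"
        using w unfolding W_def by (metis PiE_ext atLeastLessThan_iff zero_le)
      have wi: "w i < N" "w' i < N" using w i unfolding W_def by auto
      define t where "t = L0 + 2 * L * i + L"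
      have "2 * L * (i + 1) \<le> 2 * L * k" using i by (intro mult_left_mono) auto
      also have "2 * L * k \<le> n - L0" unfolding k_def by simp
      finally have tn: "t \<le> n" unfolding t_def using n by (simp add: algebra_simps)
      have "zz (w i) \<noteq> zz (w' i)" using zzinj wi i by (auto simp: inj_on_def)
      moreover have "zz (w i) \<in> Z" "zz (w' i) \<in> Z" using wi zz by (auto simp: bij_betw_def)
      ultimately have "R < d (zz (w i)) (zz (w' i))" using Zsep by blast
      also have "\<dots> = d (rp w t) (rp w' t)" unfolding rp_def t_def using tn Pmid wi
        unfolding t_def zw_def by auto
      also have "\<dots> \<le> path_dist d n (rp w) (rp w')" using tn by (rule path_dist_ge)
      finally show ?thesis .
    qed
    have inj: "inj_on rp W"
    proof (rule inj_onI, rule ccontr)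
      fix w w' assume "w \<in> W" "w' \<in> W" "rp w = rp w'" "w \<noteq> w'"
      then have "path_dist d n (rp w) (rp w) > R" using sep by metis
      moreover have dz: "\<And>t. d (P w t) (P w t) = 0" using Metric_space.zero[OF ms] PX by blast
      moreover have "path_dist d n (rp w) (rp w) = 0" unfolding path_dist_def rp_def
        using dz by simp
      ultimately show False using R by simp
    qed
    have sub: "rp ` W \<subseteq> delta_paths X d n \<delta> x0"
      unfolding delta_paths_def rp_def using PX P0 Pstep by auto
    have "ereal (real (card (rp ` W))) \<le> separated_count X d n R \<delta> x0"
      by (rule sc_ge[OF sub]) (use sep in \<open>auto simp: W_def intro!: finite_PiE\<close>)
    moreover have "card (rp ` W) = N ^ k"
      using card_image[OF inj] unfolding W_def by (simp add: card_PiE)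
    ultimately show ?thesis unfolding k_def by simp
  qed
  have "ereal (ln (real N) / real (2 * L)) \<le> ent X d \<delta> R x0"
    by (rule ent_lb[OF ms x0 \<delta>0 N1, of "2 * L" L0]) (use L1 count in auto)
  then show ?thesis unfolding N_def L_def h_def .
qed


definition rsep :: "('a \<Rightarrow> 'a \<Rightarrow> real) \<Rightarrow> real \<Rightarrow> 'a set \<Rightarrow> bool" where
  "rsep d r Y \<longleftrightarrow> (\<forall>a\<in>Y. \<forall>b\<in>Y. a \<noteq> b \<longrightarrow> d a b > r)"

lemma cbg_from_bound:
  assumes ms: "Metric_space X d" and ne: "X \<noteq> {}" and r: "r > 0"
    and bnd: "\<forall>\<rho>. \<exists>N::nat. \<forall>x\<in>X. \<forall>Y. Y \<subseteq> X \<and> (\<forall>y\<in>Y. d x y \<le> \<rho>) \<and> rsep d r Y \<longrightarrow> finite Y \<and> card Y \<le> N"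
  shows "coarsely_bounded_geometry X d"
proof -
  define \<A> where "\<A> = {Y. Y \<subseteq> X \<and> rsep d r Y}"
  have "\<exists>M\<in>\<A>. \<forall>Y\<in>\<A>. M \<subseteq> Y \<longrightarrow> Y = M"
  proof (rule subset_Zorn')
    fix Ch assume ch: "subset.chain \<A> Ch"
    show "\<Union> Ch \<in> \<A>" unfolding \<A>_def rsep_def
    proof safe
      fix a b Ya Yb assume "a \<in> Ya" "Ya \<in> Ch" "b \<in> Yb" "Yb \<in> Ch" "a \<noteq> b"
      from ch \<open>Ya \<in> Ch\<close> \<open>Yb \<in> Ch\<close> have "Ya \<subseteq> Yb \<or> Yb \<subseteq> Ya" by (auto simp: subset_chain_def)
      moreover have "Ya \<in> \<A>" "Yb \<in> \<A>" using ch \<open>Ya \<in> Ch\<close> \<open>Yb \<in> Ch\<close> by (auto simp: subset_chain_def)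
      ultimately obtain Y where Y: "Y \<in> \<A>" "a \<in> Y" "b \<in> Y" using \<open>a \<in> Ya\<close> \<open>b \<in> Yb\<close> by blast
      then have "rsep d r Y" unfolding \<A>_def by simp
      then show "r < d a b" using Y \<open>a \<noteq> b\<close> unfolding rsep_def by simp
    next
      fix a Y assume "a \<in> Y" "Y \<in> Ch"
      then show "a \<in> X" using ch by (auto simp: subset_chain_def \<A>_def)
    qed
  qed
  then obtain M where MA: "M \<in> \<A>" and Mmax: "\<forall>Y\<in>\<A>. M \<subseteq> Y \<longrightarrow> Y = M" by blast
  have MX: "M \<subseteq> X" and Msep: "rsep d r M" using MA unfolding \<A>_def by auto
  have cover: "\<exists>y\<in>M. d x y \<le> r" if x: "x \<in> X" for x
  proof (rule ccontr)
    assume "\<not> (\<exists>y\<in>M. d x y \<le> r)"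
    then have far: "\<forall>y\<in>M. d x y > r" by auto
    have "d x x = 0" using Metric_space.zero[OF ms] x by auto
    then have "x \<notin> M" using far r by auto
    have far': "\<forall>y\<in>M. d y x > r" using far Metric_space.commute[OF ms, of x] by auto
    have "rsep d r (insert x M)" unfolding rsep_def
    proof (intro ballI impI)
      fix a b assume "a \<in> insert x M" "b \<in> insert x M" "a \<noteq> b"
      then consider "a = x" "b \<in> M" | "b = x" "a \<in> M" | "a \<in> M" "b \<in> M" by auto
      then show "r < d a b"
      proof cases
        case 3 then show ?thesis using Msep \<open>a \<noteq> b\<close> unfolding rsep_def by simp
      qed (use far far' in auto)
    qed
    then have "insert x M \<in> \<A>" unfolding \<A>_def using x MX by auto
    then have "insert x M = M" using Mmax by blast
    then show False using \<open>x \<notin> M\<close> by auto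
  qed
  define sel where "sel x = (SOME y. y \<in> M \<and> d x y \<le> r)" for x
  have sel: "sel x \<in> M \<and> d x (sel x) \<le> r" if "x \<in> X" for x
    unfolding sel_def using cover[OF that] by (metis (mono_tags, lifting) someI_ex)
  obtain x1 where x1: "x1 \<in> X" using ne by auto
  define m0 where "m0 = sel x1"
  have m0: "m0 \<in> M" using sel[OF x1] unfolding m0_def by auto
  have "countable M"
  proof -
    have "M = (\<Union>k::nat. {y\<in>M. d m0 y \<le> real k})"
    proof safe
      fix y assume "y \<in> M"
      obtain k :: nat where "d m0 y \<le> real k" using real_arch_simple by blast
      then show "y \<in> (\<Union>k::nat. {y\<in>M. d m0 y \<le> real k})" using \<open>y \<in> M\<close> by auto
    qed
    moreover have fin: "finite {y\<in>M. d m0 y \<le> real k}" for k :: nat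
    proof -
      obtain N :: nat where N: "\<forall>x\<in>X. \<forall>Y. Y \<subseteq> X \<and> (\<forall>y\<in>Y. d x y \<le> real k) \<and> rsep d r Y \<longrightarrow> finite Y \<and> card Y \<le> N"
        using bnd by blast
      have "rsep d r {y\<in>M. d m0 y \<le> real k}" using Msep unfolding rsep_def by auto
      moreover have "m0 \<in> X" using m0 MX by auto
      moreover have "{y\<in>M. d m0 y \<le> real k} \<subseteq> X" using MX by auto
      ultimately have "{y\<in>M. d m0 y \<le> real k} \<subseteq> X \<and> (\<forall>y\<in>{y\<in>M. d m0 y \<le> real k}. d m0 y \<le> real k) \<and> rsep d r {y\<in>M. d m0 y \<le> real k}"
        by auto
      from N[rule_format, OF \<open>m0 \<in> X\<close> this] show ?thesis by simp
    qed
    moreover note fin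
    ultimately have "countable (\<Union>k::nat. {y\<in>M. d m0 y \<le> real k})"
      by (intro countable_UN[of UNIV]) (auto intro: countable_finite)
    then show ?thesis using \<open>M = _\<close> by simp
  qed
  then obtain g :: "'a \<Rightarrow> nat" where g: "inj_on g M" by (rule countableE)
  define T where "T = g ` M"
  define e where "e u v = d (inv_into M g u) (inv_into M g v)" for u v
  have invM: "inv_into M g u \<in> M" if "u \<in> T" for u using that unfolding T_def by (auto intro: inv_into_into)
  have eg: "e (g a) (g b) = d a b" if "a \<in> M" "b \<in> M" for a b
    unfolding e_def using g that by (simp add: inv_into_f_f)
  have mT: "Metric_space T e"
    unfolding Metric_space_def
  proof (intro conjI allI impI)
    fix x y show "0 \<le> e x y" unfolding e_def using Metric_space.nonneg[OF ms] .
    show "e x y = e y x" unfolding e_def using Metric_space.commute[OF ms] by simp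
  next
    fix x y assume "x \<in> T" "y \<in> T"
    then obtain a b where ab: "a \<in> M" "b \<in> M" "x = g a" "y = g b" unfolding T_def by auto
    have "a \<in> X" "b \<in> X" using ab MX by auto
    have "(d a b = 0) = (a = b)" using Metric_space.zero[OF ms \<open>a \<in> X\<close> \<open>b \<in> X\<close>] .
    moreover have "(g a = g b) = (a = b)" using g ab by (auto simp: inj_on_def)
    ultimately show "(e x y = 0) = (x = y)" using ab eg by simp
  next
    fix x y z assume "x \<in> T" "y \<in> T" "z \<in> T"
    then show "e x z \<le> e x y + e y z" unfolding e_def using invM MX Metric_space.triangle[OF ms] by blast
  qed
  have bg: "bounded_geometry T e"
    unfolding bounded_geometry_def
  proof (intro allI impI)
    fix r' :: real assume "r' > 0"
    obtain N :: nat where N: "\<forall>x\<in>X. \<forall>Y. Y \<subseteq> X \<and> (\<forall>y\<in>Y. d x y \<le> r') \<and> rsep d r Y \<longrightarrow> finite Y \<and> card Y \<le> N"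
      using bnd by blast
    show "\<exists>N. \<forall>x\<in>T. finite {y \<in> T. e x y \<le> r'} \<and> card {y \<in> T. e x y \<le> r'} \<le> N"
    proof (intro exI ballI)
      fix u assume u: "u \<in> T"
      then obtain a where a: "a \<in> M" "u = g a" unfolding T_def by auto
      define Y where "Y = {b\<in>M. d a b \<le> r'}"
      have "a \<in> X" using a MX by auto
      have "Y \<subseteq> X \<and> (\<forall>y\<in>Y. d a y \<le> r') \<and> rsep d r Y" using MX Msep unfolding Y_def rsep_def by auto
      from N[rule_format, OF \<open>a \<in> X\<close> this] have Y: "finite Y \<and> card Y \<le> N" .
      have "{y \<in> T. e u y \<le> r'} = g ` Y" unfolding Y_def T_def using a eg by auto
      then show "finite {y \<in> T. e u y \<le> r'} \<and> card {y \<in> T. e u y \<le> r'} \<le> N"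
        using Y card_image_le[of Y g] by auto
    qed
  qed
  define F where "F x = g (sel x)" for x
  have ce: "coarse_equivalence X d T e F"
    unfolding coarse_equivalence_def
  proof (intro conjI)
    show "F ` X \<subseteq> T" unfolding F_def T_def using sel by auto
    have eF: "e (F x) (F x') = d (sel x) (sel x')" if "x \<in> X" "x' \<in> X" for x x'
      unfolding F_def using sel that eg by auto
    have up: "d (sel x) (sel x') \<le> d x x' + 2 * r" if x: "x \<in> X" "x' \<in> X" for x x'
    proof -
      have "d (sel x) (sel x') \<le> d (sel x) x + d x (sel x')"
        using Metric_space.triangle[OF ms] sel x MX by blast
      also have "\<dots> \<le> d (sel x) x + (d x x' + d x' (sel x'))"
        using Metric_space.triangle[OF ms] sel x MX by (meson add_left_mono subsetD)
      finally show ?thesis using sel[OF x(1)] sel[OF x(2)] Metric_space.commute[OF ms, of x "sel x"] by linarith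
    qed
    have lo: "d x x' - 2 * r \<le> d (sel x) (sel x')" if x: "x \<in> X" "x' \<in> X" for x x'
    proof -
      have "d x x' \<le> d x (sel x) + d (sel x) x'"
        using Metric_space.triangle[OF ms] sel x MX by blast
      also have "\<dots> \<le> d x (sel x) + (d (sel x) (sel x') + d (sel x') x')"
        using Metric_space.triangle[OF ms] sel x MX by (meson add_left_mono subsetD)
      finally show ?thesis using sel[OF x(1)] sel[OF x(2)] Metric_space.commute[OF ms, of x' "sel x'"] by linarith
    qed
    show "\<exists>\<rho>m \<rho>p. mono \<rho>m \<and> mono \<rho>p \<and> filterlim \<rho>m at_top at_top \<and>
        (\<forall>x\<in>X. \<forall>x'\<in>X. \<rho>m (d x x') \<le> e (F x) (F x') \<and> e (F x) (F x') \<le> \<rho>p (d x x'))"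
    proof (intro exI conjI)
      show "mono (\<lambda>t::real. t - 2 * r)" by (auto simp: mono_def)
      show "mono (\<lambda>t::real. t + 2 * r)" by (auto simp: mono_def)
      show "filterlim (\<lambda>t::real. t - 2 * r) at_top at_top" by real_asymp
      show "\<forall>x\<in>X. \<forall>x'\<in>X. d x x' - 2 * r \<le> e (F x) (F x') \<and> e (F x) (F x') \<le> d x x' + 2 * r"
        using eF up lo by auto
    qed
    show "\<exists>R. \<forall>y\<in>T. \<exists>x\<in>X. e y (F x) \<le> R"
    proof (intro exI ballI)
      fix y assume "y \<in> T"
      then obtain a where a: "a \<in> M" "y = g a" unfolding T_def by auto
      have "e y (F a) = d a (sel a)" unfolding F_def a using eg sel a MX by auto
      then show "\<exists>x\<in>X. e y (F x) \<le> r" using sel a MX by (intro bexI[of _ a]) auto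
    qed
  qed
  show ?thesis unfolding coarsely_bounded_geometry_def using mT bg ce unfolding T_def by blast
qed


lemma part_a:
  assumes ms: "Metric_space X d" and ne: "X \<noteq> {}" and q: "qg C A X d"
    and ncbg: "\<not> coarsely_bounded_geometry X d" and x0: "x0 \<in> X"
  shows "coarse_entropy X d x0 = \<infinity>"
proof (rule entropy_inf[of "A + 1" 1], intro allI impI)
  fix \<delta> R :: real assume \<delta>: "A + 1 \<le> \<delta>" and R: "1 \<le> R"
  have C: "C \<ge> 1" and A: "A \<ge> 0" using q unfolding qg_def by auto
  have "\<not> (\<forall>\<rho>. \<exists>N::nat. \<forall>x\<in>X. \<forall>Y. Y \<subseteq> X \<and> (\<forall>y\<in>Y. d x y \<le> \<rho>) \<and> rsep d R Y \<longrightarrow> finite Y \<and> card Y \<le> N)"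
  proof
    assume "\<forall>\<rho>. \<exists>N::nat. \<forall>x\<in>X. \<forall>Y. Y \<subseteq> X \<and> (\<forall>y\<in>Y. d x y \<le> \<rho>) \<and> rsep d R Y \<longrightarrow> finite Y \<and> card Y \<le> N"
    then have "coarsely_bounded_geometry X d" using cbg_from_bound[OF ms ne, of R] R by simp
    then show False using ncbg by simp
  qed
  then obtain \<rho> where "\<not> (\<exists>N::nat. \<forall>x\<in>X. \<forall>Y. Y \<subseteq> X \<and> (\<forall>y\<in>Y. d x y \<le> \<rho>) \<and> rsep d R Y \<longrightarrow> finite Y \<and> card Y \<le> N)"
    by blast
  then have bad: "\<forall>N::nat. \<exists>x\<in>X. \<exists>Y. Y \<subseteq> X \<and> (\<forall>y\<in>Y. d x y \<le> \<rho>) \<and> rsep d R Y \<and> \<not> (finite Y \<and> card Y \<le> N)"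
    by blast
  define L where "L = 2 * (nat \<lceil>\<rho> / ((\<delta> - A) / C)\<rceil> + 1)"
  have L: "real L > 0" unfolding L_def by simp
  show "ent X d \<delta> R x0 = \<infinity>"
  proof (rule ereal_top)
    fix B :: real
    define N where "N = nat \<lceil>exp (\<bar>B\<bar> * real L)\<rceil> + 1"
    have N1: "N \<ge> 1" unfolding N_def by simp
    obtain x Y where x: "x \<in> X" and Y: "Y \<subseteq> X" "\<forall>y\<in>Y. d x y \<le> \<rho>" "rsep d R Y" "\<not> (finite Y \<and> card Y \<le> N)"
      using bad by blast
    obtain Z where Z: "Z \<subseteq> Y" "finite Z" "card Z = N"
    proof (cases "finite Y")
      case True
      then have "N \<le> card Y" using Y(4) by simp
      then show ?thesis using obtain_subset_with_card_n that by blast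
    next
      case False
      then show ?thesis using infinite_arbitrarily_large[OF False, of N] that by blast
    qed
    have "ereal (ln (real (card Z)) / real (2 * (nat \<lceil>\<rho> / ((\<delta> - A) / C)\<rceil> + 1))) \<le> ent X d \<delta> R x0"
    proof (rule many_points_ent[OF ms q x0 x Z(2)])
      show "Z \<subseteq> X" using Z Y by auto
      show "1 \<le> card Z" using Z N1 by simp
      show "\<forall>z\<in>Z. d x z \<le> \<rho>" using Z Y by auto
      show "\<forall>z\<in>Z. \<forall>z'\<in>Z. z \<noteq> z' \<longrightarrow> R < d z z'"
      proof (intro ballI impI)
        fix z z' assume "z \<in> Z" "z' \<in> Z" "z \<noteq> z'"
        then have "z \<in> Y" "z' \<in> Y" using Z(1) by auto
        then show "R < d z z'" using Y(3) \<open>z \<noteq> z'\<close> unfolding rsep_def by simp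
      qed
      show "0 \<le> R" using R by simp
      show "A < \<delta>" using \<delta> by simp
    qed
    then have E: "ereal (ln (real N) / real L) \<le> ent X d \<delta> R x0" using Z unfolding L_def by simp
    have "exp (\<bar>B\<bar> * real L) \<le> real N" unfolding N_def by linarith
    then have "\<bar>B\<bar> * real L \<le> ln (real N)" using N1 by (simp add: ln_ge_iff)
    then have "\<bar>B\<bar> \<le> ln (real N) / real L" using L by (simp add: field_simps)
    then have "B \<le> ln (real N) / real L" by linarith
    then have "ereal B \<le> ereal (ln (real N) / real L)" by simp
    then show "ereal B \<le> ent X d \<delta> R x0" using E by (rule order.trans)
  qed
qed


definition gd :: "nat set \<Rightarrow> (nat \<Rightarrow> nat \<Rightarrow> bool) \<Rightarrow> nat \<Rightarrow> nat \<Rightarrow> nat" where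
  "gd V E u v = (LEAST n. gwalk V E u v n)"

lemma gdist_gd: "gdist V E u v = real (gd V E u v)"
  unfolding gdist_def gd_def ..

lemma gw_refl: "u \<in> V \<Longrightarrow> gwalk V E u u 0"
  unfolding gwalk_def by (intro exI[of _ "\<lambda>_. u"]) auto

lemma gw_edge: "simple_graph V E \<Longrightarrow> E u v \<Longrightarrow> gwalk V E u v 1"
  unfolding gwalk_def simple_graph_def
  by (intro exI[of _ "\<lambda>i. if i = 0 then u else v"]) (auto simp: le_Suc_eq)

lemma gw_ends: "gwalk V E u v n \<Longrightarrow> u \<in> V \<and> v \<in> V"
  unfolding gwalk_def by force

lemma gw_append:
  assumes "gwalk V E u v m" "gwalk V E v w n"
  shows "gwalk V E u w (m + n)"
proof -
  obtain p where p: "p 0 = u" "p m = v" "\<forall>i\<le>m. p i \<in> V" "\<forall>i<m. E (p i) (p (Suc i))"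
    using assms(1) unfolding gwalk_def by blast
  obtain q where q: "q 0 = v" "q n = w" "\<forall>i\<le>n. q i \<in> V" "\<forall>i<n. E (q i) (q (Suc i))"
    using assms(2) unfolding gwalk_def by blast
  define r where "r i = (if i \<le> m then p i else q (i - m))" for i
  have "r 0 = u" "r (m + n) = w" unfolding r_def using p q by auto
  moreover have "\<forall>i\<le>m+n. r i \<in> V" unfolding r_def using p q by auto
  moreover have "\<forall>i<m+n. E (r i) (r (Suc i))"
  proof (intro allI impI)
    fix i assume i: "i < m + n"
    consider "Suc i \<le> m" | "i = m" | "i > m" by linarith
    then show "E (r i) (r (Suc i))"
    proof cases
      case 1 then show ?thesis unfolding r_def using p by auto
    next
      case 2
      then have "n > 0" using i by simp
      then show ?thesis unfolding r_def using 2 p q by auto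
    next
      case 3
      then have "Suc i - m = Suc (i - m)" by auto
      then show ?thesis unfolding r_def using 3 q i by auto
    qed
  qed
  ultimately show ?thesis unfolding gwalk_def by blast
qed

lemma gw_rev:
  assumes sg: "simple_graph V E" and w: "gwalk V E u v n"
  shows "gwalk V E v u n"
proof -
  obtain p where p: "p 0 = u" "p n = v" "\<forall>i\<le>n. p i \<in> V" "\<forall>i<n. E (p i) (p (Suc i))"
    using w unfolding gwalk_def by blast
  define r where "r i = p (n - i)" for i
  have "\<forall>i<n. E (r i) (r (Suc i))"
  proof (intro allI impI)
    fix i assume "i < n"
    then have "n - i = Suc (n - Suc i)" by auto
    then have "E (r (Suc i)) (r i)" unfolding r_def using p \<open>i < n\<close> by auto
    then show "E (r i) (r (Suc i))" using sg unfolding simple_graph_def by blast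
  qed
  moreover have "r 0 = v" "r n = u" "\<forall>i\<le>n. r i \<in> V" unfolding r_def using p by auto
  ultimately show ?thesis unfolding gwalk_def by blast
qed

lemma gd_le: "gwalk V E u v n \<Longrightarrow> gd V E u v \<le> n"
  unfolding gd_def by (rule Least_le)

lemma gd_walk: "gwalk V E u v n \<Longrightarrow> gwalk V E u v (gd V E u v)"
  unfolding gd_def by (rule LeastI)

lemma gd_refl: "u \<in> V \<Longrightarrow> gd V E u u = 0"
  using gd_le[OF gw_refl] by auto

lemma lazy_walk:
  assumes "p 0 = u" "\<forall>i\<le>n. p i \<in> V" "\<forall>i<n. p i = p (Suc i) \<or> E (p i) (p (Suc i))" "simple_graph V E"
  shows "\<exists>m\<le>n. gwalk V E u (p n) m"
  using assms
proof (induction n)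
  case 0 then show ?case using gw_refl[of u V E] by auto
next
  case (Suc n)
  then obtain m where m: "m \<le> n" "gwalk V E u (p n) m" by auto
  show ?case
  proof (cases "p n = p (Suc n)")
    case True then show ?thesis using m by (metis le_Suc_eq)
  next
    case False
    then have "E (p n) (p (Suc n))" using Suc.prems by auto
    then have "gwalk V E u (p (Suc n)) (m + 1)" using gw_append[OF m(2) gw_edge[OF Suc.prems(4)]] by simp
    then show ?thesis using m by (intro exI[of _ "m + 1"]) auto
  qed
qed

definition conn :: "nat set \<Rightarrow> (nat \<Rightarrow> nat \<Rightarrow> bool) \<Rightarrow> bool" where
  "conn V E \<longleftrightarrow> (\<forall>u\<in>V. \<forall>v\<in>V. \<exists>n. gwalk V E u v n)"

lemma gd_tri:
  assumes "conn V E" "u \<in> V" "v \<in> V" "w \<in> V"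
  shows "gd V E u w \<le> gd V E u v + gd V E v w"
proof -
  obtain a b where ab: "gwalk V E u v a" "gwalk V E v w b" using assms unfolding conn_def by blast
  have "gwalk V E u v (gd V E u v)" "gwalk V E v w (gd V E v w)" using gd_walk[OF ab(1)] gd_walk[OF ab(2)] .
  then have "gwalk V E u w (gd V E u v + gd V E v w)" by (rule gw_append)
  then show ?thesis by (rule gd_le)
qed

lemma gd_sym_le:
  assumes sg: "simple_graph V E" and w: "gwalk V E b a k"
  shows "gd V E a b \<le> gd V E b a"
proof -
  have "gwalk V E b a (gd V E b a)" by (rule gd_walk[OF w])
  from gw_rev[OF sg this] have "gwalk V E a b (gd V E b a)" .
  then show ?thesis by (rule gd_le)
qed

lemma gd_sym:
  assumes sg: "simple_graph V E" and c: "conn V E" and uv: "u \<in> V" "v \<in> V"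
  shows "gd V E u v = gd V E v u"
proof -
  obtain k1 where k1: "gwalk V E v u k1" using c uv unfolding conn_def by blast
  obtain k2 where k2: "gwalk V E u v k2" using c uv unfolding conn_def by blast
  show ?thesis using gd_sym_le[OF sg k1] gd_sym_le[OF sg k2] by (rule antisym)
qed

lemma gd_edge: "simple_graph V E \<Longrightarrow> E u v \<Longrightarrow> gd V E u v \<le> 1"
  by (intro gd_le gw_edge)


lemma qg_path:
  assumes q: "qg C A X d" and x: "x \<in> X" and x': "x' \<in> X"
  shows "\<exists>p. p 0 = x \<and> p (d x x') = x' \<and> (\<forall>s\<in>{0..d x x'}. p s \<in> X) \<and>
     (\<forall>s\<in>{0..d x x'}. \<forall>t\<in>{0..d x x'}. d (p s) (p t) \<le> C * \<bar>s - t\<bar> + A)"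
proof -
  have "\<forall>x\<in>X. \<forall>x'\<in>X. \<exists>p :: real \<Rightarrow> 'a.
        p 0 = x \<and> p (d x x') = x' \<and> p ` {0..d x x'} \<subseteq> X \<and>
        (\<forall>s\<in>{0..d x x'}. \<forall>t\<in>{0..d x x'}.
            \<bar>s - t\<bar> / C - A \<le> d (p s) (p t) \<and> d (p s) (p t) \<le> C * \<bar>s - t\<bar> + A)"
    using q unfolding qg_def by blast
  from this[rule_format, OF x x'] obtain p where "p 0 = x \<and> p (d x x') = x' \<and> p ` {0..d x x'} \<subseteq> X \<and>
        (\<forall>s\<in>{0..d x x'}. \<forall>t\<in>{0..d x x'}. \<bar>s - t\<bar> / C - A \<le> d (p s) (p t) \<and> d (p s) (p t) \<le> C * \<bar>s - t\<bar> + A)"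
    by blast
  then show ?thesis by (intro exI[of _ p]) auto
qed

locale Gset =
  fixes X :: "'a set" and d and T :: "nat set" and e and F :: "'a \<Rightarrow> nat" and \<rho>m \<rho>p :: "real \<Rightarrow> real" and RT C A :: real
  assumes ms: "Metric_space X d" and ne: "X \<noteq> {}" and q: "qg C A X d"
    and mT: "Metric_space T e" and bg: "bounded_geometry T e"
    and FX: "F ` X \<subseteq> T" and rm_mono: "mono \<rho>m" and rp_mono: "mono \<rho>p"
    and rm_lim: "filterlim \<rho>m at_top at_top"
    and Fbd: "\<forall>x\<in>X. \<forall>x'\<in>X. \<rho>m (d x x') \<le> e (F x) (F x') \<and> e (F x) (F x') \<le> \<rho>p (d x x')"
    and dense: "\<forall>y\<in>T. \<exists>x\<in>X. e y (F x) \<le> RT"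
begin

definition "r0 = max 1 (max (\<rho>p (C + A)) RT)"
definition "Eg u v \<longleftrightarrow> u \<in> T \<and> v \<in> T \<and> u \<noteq> v \<and> e u v \<le> r0"
definition "pre v = (SOME x. x \<in> X \<and> e v (F x) \<le> RT)"

lemma r0: "r0 \<ge> 1" "RT \<le> r0" "\<rho>p (C + A) \<le> r0"
  unfolding r0_def by auto

lemma CA: "C \<ge> 1" "A \<ge> 0" using q unfolding qg_def by auto

lemma FT: "x \<in> X \<Longrightarrow> F x \<in> T" using FX by auto

lemma sg: "simple_graph T Eg"
  unfolding simple_graph_def Eg_def using Metric_space.commute[OF mT] by auto

lemma pre: "v \<in> T \<Longrightarrow> pre v \<in> X \<and> e v (F (pre v)) \<le> RT"
  unfolding pre_def using dense by (metis (mono_tags, lifting) someI_ex)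

lemma e_tri: "a \<in> T \<Longrightarrow> b \<in> T \<Longrightarrow> c \<in> T \<Longrightarrow> e a c \<le> e a b + e b c"
  using Metric_space.triangle[OF mT] by blast

lemma e_com: "e a b = e b a" using Metric_space.commute[OF mT] by blast

lemma e_zero: "a \<in> T \<Longrightarrow> e a a = 0" using Metric_space.zero[OF mT] by blast

lemma d_tri: "a \<in> X \<Longrightarrow> b \<in> X \<Longrightarrow> c \<in> X \<Longrightarrow> d a c \<le> d a b + d b c"
  using Metric_space.triangle[OF ms] by blast

lemma d_com: "d a b = d b a" using Metric_space.commute[OF ms] by blast

lemma d_zero: "a \<in> X \<Longrightarrow> d a a = 0" using Metric_space.zero[OF ms] by blast

lemma d_nonneg: "d a b \<ge> 0" using Metric_space.nonneg[OF ms] by blast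

lemma near_edge: "u \<in> T \<Longrightarrow> v \<in> T \<Longrightarrow> e u v \<le> r0 \<Longrightarrow> u = v \<or> Eg u v"
  unfolding Eg_def by auto

lemma M_ex: "\<exists>M\<ge>1. \<forall>x\<in>X. \<forall>x'\<in>X. e (F x) (F x') \<le> 3 * r0 \<longrightarrow> d x x' \<le> M"
proof -
  have "\<forall>\<^sub>F s in at_top. \<rho>m s > 3 * r0" using rm_lim by (simp add: filterlim_at_top_dense)
  then obtain M0 where M0: "\<forall>s\<ge>M0. \<rho>m s > 3 * r0" by (auto simp: eventually_at_top_linorder)
  show ?thesis
  proof (intro exI[of _ "max 1 M0"] conjI ballI impI)
    fix x x' assume x: "x \<in> X" "x' \<in> X" and le: "e (F x) (F x') \<le> 3 * r0"
    show "d x x' \<le> max 1 M0"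
    proof (rule ccontr)
      assume "\<not> d x x' \<le> max 1 M0"
      then have "\<rho>m (d x x') > 3 * r0" using M0 by auto
      then show False using Fbd x le by force
    qed
  qed auto
qed

definition "M = (SOME M. M \<ge> 1 \<and> (\<forall>x\<in>X. \<forall>x'\<in>X. e (F x) (F x') \<le> 3 * r0 \<longrightarrow> d x x' \<le> M))"

lemma M: "M \<ge> 1" "x \<in> X \<Longrightarrow> x' \<in> X \<Longrightarrow> e (F x) (F x') \<le> 3 * r0 \<Longrightarrow> d x x' \<le> M"
proof -
  have "M \<ge> 1 \<and> (\<forall>x\<in>X. \<forall>x'\<in>X. e (F x) (F x') \<le> 3 * r0 \<longrightarrow> d x x' \<le> M)"
    unfolding M_def using M_ex by (rule someI_ex[where P = "\<lambda>M. M \<ge> 1 \<and> (\<forall>x\<in>X. \<forall>x'\<in>X. e (F x) (F x') \<le> 3 * r0 \<longrightarrow> d x x' \<le> M)"]) 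
  then show "M \<ge> 1" "x \<in> X \<Longrightarrow> x' \<in> X \<Longrightarrow> e (F x) (F x') \<le> 3 * r0 \<Longrightarrow> d x x' \<le> M" by auto
qed

lemma walk_e:
  assumes "gwalk T Eg u v n"
  shows "e u v \<le> real n * r0"
proof -
  obtain p where p: "p 0 = u" "p n = v" "\<forall>i\<le>n. p i \<in> T" "\<forall>i<n. Eg (p i) (p (Suc i))"
    using assms unfolding gwalk_def by blast
  have "e u (p j) \<le> real j * r0" if "j \<le> n" for j
    using that
  proof (induction j)
    case 0 then show ?case using p e_zero by auto
  next
    case (Suc j)
    have "e u (p (Suc j)) \<le> e u (p j) + e (p j) (p (Suc j))"
      using p Suc.prems by (intro e_tri) auto
    also have "\<dots> \<le> real j * r0 + r0" using Suc p unfolding Eg_def by (intro add_mono) auto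
    finally show ?case by (simp add: algebra_simps)
  qed
  then show ?thesis using p by auto
qed

lemma walk_lower:
  assumes x: "x \<in> X" "x' \<in> X" and w: "gwalk T Eg (F x) (F x') n"
  shows "d x x' \<le> M * (real n + 1)"
proof -
  obtain p where p: "p 0 = F x" "p n = F x'" "\<forall>i\<le>n. p i \<in> T" "\<forall>i<n. Eg (p i) (p (Suc i))"
    using w unfolding gwalk_def by blast
  define xs where "xs j = (if j = n then x' else pre (p j))" for j
  have xs: "xs j \<in> X \<and> e (p j) (F (xs j)) \<le> r0" if "j \<le> n" for j
  proof (cases "j = n")
    case True then show ?thesis unfolding xs_def using x p e_zero FT r0 by auto
  next
    case False then show ?thesis unfolding xs_def using pre[of "p j"] p that r0 by auto
  qed
  have step: "d (xs j) (xs (Suc j)) \<le> M" if "j < n" for j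
  proof -
    have a: "xs j \<in> X" "xs (Suc j) \<in> X" using xs that by auto
    have "e (F (xs j)) (F (xs (Suc j))) \<le> e (F (xs j)) (p j) + e (p j) (F (xs (Suc j)))"
      using a p that FT by (intro e_tri) auto
    also have "\<dots> \<le> e (F (xs j)) (p j) + (e (p j) (p (Suc j)) + e (p (Suc j)) (F (xs (Suc j))))"
      using a p that FT by (intro add_left_mono e_tri) auto
    also have "\<dots> \<le> r0 + (r0 + r0)"
      using xs[of j] xs[of "Suc j"] p that e_com[of "F (xs j)" "p j"] unfolding Eg_def
      by (intro add_mono) auto
    finally show ?thesis using M(2)[OF a] by simp
  qed
  have tel: "d (xs 0) (xs j) \<le> M * real j" if "j \<le> n" for j
    using that
  proof (induction j)
    case 0 then show ?case using xs[of 0] d_zero by auto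
  next
    case (Suc j)
    have "d (xs 0) (xs (Suc j)) \<le> d (xs 0) (xs j) + d (xs j) (xs (Suc j))"
      using xs Suc.prems by (intro d_tri) auto
    also have "\<dots> \<le> M * real j + M" using Suc step by (intro add_mono) auto
    finally show ?case by (simp add: algebra_simps)
  qed
  have "e (F x) (F (xs 0)) \<le> 3 * r0" using xs[of 0] p r0 by auto
  then have d0: "d x (xs 0) \<le> M" using M(2) x xs[of 0] by auto
  have "d x (xs n) \<le> d x (xs 0) + d (xs 0) (xs n)" using x xs[of 0] xs[of n]
    by (intro d_tri) auto
  also have "\<dots> \<le> M + M * real n" using d0 tel[of n] by auto
  finally show ?thesis unfolding xs_def by (simp add: algebra_simps)
qed

end


context Gset begin

lemma walk_upper:
  assumes x: "x \<in> X" and x': "x' \<in> X"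
  shows "\<exists>m. real m \<le> d x x' + 1 \<and> gwalk T Eg (F x) (F x') m"
proof -
  define D where "D = d x x'"
  obtain p where p0: "p 0 = x" and pD: "p D = x'" and pX: "\<forall>s\<in>{0..D}. p s \<in> X"
    and pd: "\<forall>s\<in>{0..D}. \<forall>t\<in>{0..D}. d (p s) (p t) \<le> C * \<bar>s - t\<bar> + A"
    using qg_path[OF q x x'] unfolding D_def by blast
  have D: "D \<ge> 0" unfolding D_def using d_nonneg .
  define n where "n = nat \<lceil>D\<rceil>"
  define w where "w j = F (p (min (real j) D))" for j :: nat
  have wT: "\<forall>i\<le>n. w i \<in> T" unfolding w_def using pX D FT by auto
  have wstep: "\<forall>i<n. w i = w (Suc i) \<or> Eg (w i) (w (Suc i))"
  proof (intro allI impI)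
    fix i assume "i < n"
    let ?s = "min (real i) D" and ?t = "min (real (Suc i)) D"
    have st: "\<bar>?s - ?t\<bar> \<le> 1" by (auto simp: min_def)
    have inX: "p ?s \<in> X" "p ?t \<in> X" using pX D by auto
    have "d (p ?s) (p ?t) \<le> C * \<bar>?s - ?t\<bar> + A" using pd D by (intro pd[rule_format]) auto
    also have "\<dots> \<le> C + A" using st CA by (simp add: mult_left_le)
    finally have "\<rho>p (d (p ?s) (p ?t)) \<le> \<rho>p (C + A)" using rp_mono by (simp add: monoD)
    then have "e (w i) (w (Suc i)) \<le> r0" unfolding w_def using Fbd inX r0 by force
    then show "w i = w (Suc i) \<or> Eg (w i) (w (Suc i))" using near_edge wT \<open>i < n\<close> by auto
  qed
  obtain m where m: "m \<le> n" "gwalk T Eg (w 0) (w n) m"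
    using lazy_walk[of w "w 0" n T Eg] wT wstep sg by auto
  have "w 0 = F x" unfolding w_def using p0 D by simp
  moreover have "w n = F x'"
  proof -
    have "D \<le> real n" unfolding n_def by linarith
    then have "min (real n) D = D" by (rule min_absorb2)
    then show ?thesis unfolding w_def using pD by simp
  qed
  moreover have "real m \<le> D + 1"
  proof -
    have "real m \<le> real n" using m(1) by simp
    moreover have "real n \<le> D + 1" unfolding n_def using D by linarith
    ultimately show ?thesis by linarith
  qed
  ultimately show ?thesis using m unfolding D_def by auto
qed

lemma pre_walk: "v \<in> T \<Longrightarrow> \<exists>k\<le>1. gwalk T Eg v (F (pre v)) k"
proof -
  assume v: "v \<in> T"
  have "e v (F (pre v)) \<le> r0" using pre[OF v] r0 by auto
  then have "v = F (pre v) \<or> Eg v (F (pre v))" using near_edge v FT pre[OF v] by auto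
  then show ?thesis using gw_refl[OF v, of Eg] gw_edge[OF sg] by force
qed

lemma conn: "conn T Eg"
  unfolding conn_def
proof (intro ballI)
  fix u v assume u: "u \<in> T" and v: "v \<in> T"
  obtain k1 where k1: "gwalk T Eg u (F (pre u)) k1" using pre_walk[OF u] by blast
  obtain k2 where k2: "gwalk T Eg v (F (pre v)) k2" using pre_walk[OF v] by blast
  obtain m where m: "gwalk T Eg (F (pre u)) (F (pre v)) m" using walk_upper pre u v by blast
  show "\<exists>n. gwalk T Eg u v n" using gw_append[OF gw_append[OF k1 m] gw_rev[OF sg k2]] by blast
qed

lemma graph_conn: "graph_connected T Eg"
  unfolding graph_connected_def using conn FT ne unfolding conn_def by blast

lemma gd_FF_upper: "x \<in> X \<Longrightarrow> x' \<in> X \<Longrightarrow> real (gd T Eg (F x) (F x')) \<le> d x x' + 1"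
  using walk_upper gd_le by (meson of_nat_le_iff order.trans)

lemma gd_FF_lower:
  assumes "x \<in> X" "x' \<in> X"
  shows "d x x' \<le> M * (real (gd T Eg (F x) (F x')) + 1)"
proof -
  obtain m where "gwalk T Eg (F x) (F x') m" using walk_upper assms by blast
  from gd_walk[OF this] show ?thesis using walk_lower assms by blast
qed

lemma gd_pre: "v \<in> T \<Longrightarrow> gd T Eg v (F (pre v)) \<le> 1"
  using pre_walk gd_le by (meson order.trans)

lemma gd_pre': "v \<in> T \<Longrightarrow> gd T Eg (F (pre v)) v \<le> 1"
  using gd_pre gd_sym[OF sg conn] FT pre by metis

lemma bdeg: "bounded_degree T Eg"
proof -
  obtain N where N: "\<forall>x\<in>T. finite {y\<in>T. e x y \<le> r0} \<and> card {y\<in>T. e x y \<le> r0} \<le> N"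
    using bg r0 unfolding bounded_geometry_def by (meson less_le_trans zero_less_one)
  show ?thesis unfolding bounded_degree_def
  proof (intro exI ballI)
    fix v assume v: "v \<in> T"
    have sub: "{w\<in>T. Eg v w} \<subseteq> {y\<in>T. e v y \<le> r0}" unfolding Eg_def by auto
    show "finite {w\<in>T. Eg v w} \<and> card {w\<in>T. Eg v w} \<le> N"
      using N v finite_subset[OF sub] card_mono[OF _ sub] by fastforce
  qed
qed

lemma qi: "quasi_isometric X d T (gdist T Eg)"
  unfolding quasi_isometric_def quasi_isometry_def
proof (intro exI conjI ballI)
  show "1 \<le> M" "(0::real) \<le> 1" using M by auto
  show "F ` X \<subseteq> T" using FX .
next
  fix x x' assume x: "x \<in> X" "x' \<in> X"
  have u: "gdist T Eg (F x) (F x') \<le> d x x' + 1" using gd_FF_upper[OF x] unfolding gdist_gd .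
  have l: "d x x' \<le> M * (gdist T Eg (F x) (F x') + 1)" using gd_FF_lower[OF x] unfolding gdist_gd .
  have "1 * d x x' \<le> M * d x x'" using M(1) d_nonneg by (intro mult_right_mono) auto
  then show "gdist T Eg (F x) (F x') \<le> M * d x x' + 1" using u by linarith
  have "d x x' / M \<le> gdist T Eg (F x) (F x') + 1" using l M(1) by (simp add: divide_le_eq mult.commute)
  then show "d x x' / M - 1 \<le> gdist T Eg (F x) (F x')" by linarith
next
  fix y assume y: "y \<in> T"
  show "\<exists>x\<in>X. gdist T Eg y (F x) \<le> 1"
    using gd_pre[OF y] pre[OF y] unfolding gdist_gd by (intro bexI[of _ "pre y"]) auto
qed

lemma gball_e: "v \<in> T \<Longrightarrow> w \<in> gball T Eg v (real l) \<Longrightarrow> e v w \<le> real l * r0"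
proof -
  assume v: "v \<in> T" and w: "w \<in> gball T Eg v (real l)"
  then have wT: "w \<in> T" and g: "gd T Eg v w \<le> l" unfolding gball_def gdist_gd by auto
  obtain k where "gwalk T Eg v w k" using conn v wT unfolding conn_def by blast
  from walk_e[OF gd_walk[OF this]] have "e v w \<le> real (gd T Eg v w) * r0" .
  also have "\<dots> \<le> real l * r0" using g r0 by (intro mult_right_mono) auto
  finally show ?thesis .
qed

lemma gball_bound: "\<exists>N::nat. \<forall>v\<in>T. finite (gball T Eg v (real l)) \<and> card (gball T Eg v (real l)) \<le> N"
proof -
  have "real l * r0 + 1 > 0" using r0 by (simp add: add_nonneg_pos)
  then obtain N where N: "\<forall>x\<in>T. finite {y\<in>T. e x y \<le> real l * r0 + 1} \<and> card {y\<in>T. e x y \<le> real l * r0 + 1} \<le> N"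
    using bg unfolding bounded_geometry_def by blast
  show ?thesis
  proof (intro exI ballI)
    fix v assume v: "v \<in> T"
    have sub: "gball T Eg v (real l) \<subseteq> {y\<in>T. e v y \<le> real l * r0 + 1}"
      using gball_e[OF v] unfolding gball_def by fastforce
    show "finite (gball T Eg v (real l)) \<and> card (gball T Eg v (real l)) \<le> N"
      using N v finite_subset[OF sub] card_mono[OF _ sub] by fastforce
  qed
qed

lemma gball_fin: "v \<in> T \<Longrightarrow> finite (gball T Eg v (real l))"
  using gball_bound by blast

lemma gball_self: "v \<in> T \<Longrightarrow> v \<in> gball T Eg v (real l)"
  unfolding gball_def gdist_gd using gd_refl by auto

lemma growth_bdd: "bdd_above ((\<lambda>v. real (card (gball T Eg v (real l)))) ` T)"
proof -
  obtain N :: nat where "\<forall>v\<in>T. finite (gball T Eg v (real l)) \<and> card (gball T Eg v (real l)) \<le> N"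
    using gball_bound by blast
  then show ?thesis by (intro bdd_aboveI[of _ "real N"]) auto
qed

lemma T_ne: "T \<noteq> {}" using FT ne by blast

lemma growth_ge: "v \<in> T \<Longrightarrow> real (card (gball T Eg v (real l))) \<le> growth T Eg l"
  unfolding growth_def using growth_bdd by (rule cSUP_upper2) auto

lemma growth_1: "growth T Eg l \<ge> 1"
proof -
  obtain v where v: "v \<in> T" using T_ne by blast
  have "card (gball T Eg v (real l)) \<ge> 1" using gball_fin[OF v] gball_self[OF v]
    by (metis One_nat_def Suc_leI card_gt_0_iff empty_iff)
  then have "1 \<le> real (card (gball T Eg v (real l)))" by simp
  then show ?thesis using growth_ge[OF v, of l] by linarith
qed

lemma growth_big: "\<exists>v\<in>T. growth T Eg l / 2 < real (card (gball T Eg v (real l)))"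
proof -
  have "growth T Eg l / 2 < growth T Eg l" using growth_1[of l] by simp
  then show ?thesis unfolding growth_def using less_cSUP_iff[OF T_ne growth_bdd] by blast
qed

end


lemma count_seqs:
  assumes v0: "v0 \<in> V" and B: "\<forall>v\<in>V. B v \<subseteq> V \<and> finite (B v) \<and> real (card (B v)) \<le> G"
  shows "finite {s \<in> {0..J} \<rightarrow>\<^sub>E V. s 0 = v0 \<and> (\<forall>j<J. s (Suc j) \<in> B (s j))} \<and>
         real (card {s \<in> {0..J} \<rightarrow>\<^sub>E V. s 0 = v0 \<and> (\<forall>j<J. s (Suc j) \<in> B (s j))}) \<le> G ^ J"
proof (induction J)
  case 0
  have "{s \<in> {0..0::nat} \<rightarrow>\<^sub>E V. s 0 = v0 \<and> (\<forall>j<0. s (Suc j) \<in> B (s j))} = {(\<lambda>i\<in>{0..0::nat}. v0)}"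
    using v0 by (auto simp: PiE_def extensional_def fun_eq_iff)
  then show ?case by simp
next
  case (Suc J)
  define S where "S J = {s \<in> {0..J} \<rightarrow>\<^sub>E V. s 0 = v0 \<and> (\<forall>j<J. s (Suc j) \<in> B (s j))}" for J
  have IH: "finite (S J)" "real (card (S J)) \<le> G ^ J" using Suc unfolding S_def by auto
  define \<Sigma> where "\<Sigma> = (SIGMA s:S J. B (s J))"
  have sub: "S (Suc J) \<subseteq> (\<lambda>(s, w). s(Suc J := w)) ` \<Sigma>"
  proof
    fix t assume t: "t \<in> S (Suc J)"
    define s where "s = restrict t {0..J}"
    have "s \<in> S J" using t unfolding S_def s_def by (auto simp: PiE_def)
    moreover have "t (Suc J) \<in> B (s J)" using t unfolding S_def s_def by auto
    moreover have "t = s(Suc J := t (Suc J))"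
      using t unfolding S_def s_def by (auto simp: fun_eq_iff PiE_def extensional_def le_Suc_eq)
    ultimately show "t \<in> (\<lambda>(s, w). s(Suc J := w)) ` \<Sigma>" unfolding \<Sigma>_def
      by (intro image_eqI[of _ _ "(s, t (Suc J))"]) auto
  qed
  have sJ: "s J \<in> V" if "s \<in> S J" for s using that unfolding S_def by auto
  have fin\<Sigma>: "finite \<Sigma>" unfolding \<Sigma>_def using IH B sJ by (intro finite_SigmaI) auto
  have "card \<Sigma> = (\<Sum>s\<in>S J. card (B (s J)))" unfolding \<Sigma>_def using IH B sJ by (intro card_SigmaI) auto
  then have "real (card \<Sigma>) = (\<Sum>s\<in>S J. real (card (B (s J))))" by simp
  also have "\<dots> \<le> (\<Sum>s\<in>S J. G)" using B sJ by (intro sum_mono) auto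
  also have "\<dots> = real (card (S J)) * G" by simp
  also have "\<dots> \<le> G ^ J * G"
  proof -
    have "G \<ge> 0" using B v0 by (meson of_nat_0_le_iff order.trans)
    then show ?thesis using IH by (intro mult_right_mono) auto
  qed
  finally have c\<Sigma>: "real (card \<Sigma>) \<le> G ^ Suc J" by (simp add: algebra_simps)
  have "finite (S (Suc J))" using finite_subset[OF sub] fin\<Sigma> by auto
  moreover have "card (S (Suc J)) \<le> card \<Sigma>"
    using card_mono[OF _ sub] card_image_le[OF fin\<Sigma>] fin\<Sigma> by (meson finite_imageI order.trans)
  ultimately show ?case using c\<Sigma> unfolding S_def
    by (metis (no_types, lifting) of_nat_le_iff order.trans)
qed

lemma dpath_tel:
  assumes p: "p \<in> delta_paths S d n \<delta> x0" and ab: "a \<le> b" "b \<le> n"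
    and tri: "\<And>x y z. x \<in> S \<Longrightarrow> y \<in> S \<Longrightarrow> z \<in> S \<Longrightarrow> d x z \<le> d x y + d y z"
    and z: "\<And>x. x \<in> S \<Longrightarrow> d x x = 0"
  shows "d (p a) (p b) \<le> real (b - a) * \<delta>"
  using ab
proof (induction b)
  case 0
  have "p 0 \<in> S" using p unfolding delta_paths_def by (auto simp: PiE_def Pi_def)
  then show ?case using z 0 by auto
next
  case (Suc b)
  show ?case
  proof (cases "a = Suc b")
    case True
    have "p a \<in> S" using p Suc.prems unfolding delta_paths_def by (auto simp: PiE_def Pi_def)
    then show ?thesis using z True by auto
  next
    case False
    then have ab': "a \<le> b" using Suc.prems by simp
    have inS: "p a \<in> S" "p b \<in> S" "p (Suc b) \<in> S" using p Suc.prems unfolding delta_paths_def by (auto simp: PiE_def)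
    have "d (p a) (p (Suc b)) \<le> d (p a) (p b) + d (p b) (p (Suc b))" using tri inS by blast
    also have "\<dots> \<le> real (b - a) * \<delta> + \<delta>" using Suc ab' p unfolding delta_paths_def by (intro add_mono) auto
    also have "\<dots> = real (Suc b - a) * \<delta>" using ab' by (simp add: Suc_diff_le algebra_simps)
    finally show ?thesis .
  qed
qed


context Gset begin

lemma ub_ent:
  assumes x0: "x0 \<in> X" and \<delta>: "\<delta> > 0" and k: "k \<ge> 1" and R: "2 * real k * \<delta> + M \<le> R"
  shows "ent X d \<delta> R x0 \<le> ereal (ln (growth T Eg (nat \<lceil>real k * \<delta>\<rceil> + 1)) / real k)"
proof -
  define l where "l = nat \<lceil>real k * \<delta>\<rceil> + 1"
  define G where "G = growth T Eg l"
  have G1: "G \<ge> 1" unfolding G_def by (rule growth_1)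
  have Bc: "\<forall>v\<in>T. gball T Eg v (real l) \<subseteq> T \<and> finite (gball T Eg v (real l)) \<and> real (card (gball T Eg v (real l))) \<le> G"
    unfolding G_def using gball_fin growth_ge unfolding gball_def by auto
  have tri: "\<And>x y z. x \<in> X \<Longrightarrow> y \<in> X \<Longrightarrow> z \<in> X \<Longrightarrow> d x z \<le> d x y + d y z" by (rule d_tri)
  have "\<forall>n\<ge>1. separated_count X d n R \<delta> x0 \<le> ereal (G ^ (n div k + 1))"
  proof (intro allI impI)
    fix n :: nat assume "n \<ge> 1"
    define J where "J = n div k + 1"
    define S where "S = {s \<in> {0..J} \<rightarrow>\<^sub>E T. s 0 = F x0 \<and> (\<forall>j<J. s (Suc j) \<in> gball T Eg (s j) (real l))}"
    have S: "finite S" "real (card S) \<le> G ^ J" unfolding S_def using count_seqs[OF FT[OF x0] Bc] by auto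
    show "separated_count X d n R \<delta> x0 \<le> ereal (G ^ (n div k + 1))"
    proof (rule sc_le)
      fix P assume Pd: "P \<subseteq> delta_paths X d n \<delta> x0" and Pf: "finite P"
        and Ps: "\<forall>p\<in>P. \<forall>q\<in>P. p \<noteq> q \<longrightarrow> R < path_dist d n p q"
      define \<phi> where "\<phi> p = (\<lambda>j\<in>{0..J}. F (p (min (j * k) n)))" for p :: "nat \<Rightarrow> 'a"
      have pX: "p i \<in> X" if "p \<in> P" "i \<le> n" for p i
        using that Pd unfolding delta_paths_def by (auto simp: PiE_def Pi_def)
      have tel: "d (p a) (p b) \<le> real (b - a) * \<delta>" if "p \<in> P" "a \<le> b" "b \<le> n" for p a b
      proof -
        have "p \<in> delta_paths X d n \<delta> x0" using that Pd by auto
        from dpath_tel[of p X d n \<delta> x0 a b, OF this that(2,3) tri d_zero] show ?thesis by blast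
      qed
      have img: "\<phi> ` P \<subseteq> S"
      proof
        fix s assume "s \<in> \<phi> ` P"
        then obtain p where p: "p \<in> P" "s = \<phi> p" by blast
        have "s \<in> {0..J} \<rightarrow>\<^sub>E T" unfolding p \<phi>_def using pX[OF p(1)] FT by auto
        moreover have "s 0 = F x0" unfolding p \<phi>_def using Pd p unfolding delta_paths_def by auto
        moreover have "\<forall>j<J. s (Suc j) \<in> gball T Eg (s j) (real l)"
        proof (intro allI impI)
          fix j assume j: "j < J"
          define a where "a = min (j * k) n"
          define b where "b = min (Suc j * k) n"
          have ab: "a \<le> b" "b \<le> n" "b - a \<le> k" unfolding a_def b_def by (auto simp: min_def)
          have dab: "d (p a) (p b) \<le> real k * \<delta>"
          proof -
            have "d (p a) (p b) \<le> real (b - a) * \<delta>" using tel p ab by auto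
            also have "\<dots> \<le> real k * \<delta>" using ab \<delta> by (intro mult_right_mono) auto
            finally show ?thesis .
          qed
          have inX: "p a \<in> X" "p b \<in> X" using pX p ab by auto
          have "real (gd T Eg (F (p a)) (F (p b))) \<le> real k * \<delta> + 1" using gd_FF_upper[OF inX] dab by linarith
          also have "\<dots> \<le> real l" unfolding l_def by linarith
          finally have "gdist T Eg (F (p a)) (F (p b)) \<le> real l" unfolding gdist_gd .
          moreover have "s j = F (p a)" "s (Suc j) = F (p b)" unfolding p \<phi>_def a_def b_def using j by auto
          ultimately show "s (Suc j) \<in> gball T Eg (s j) (real l)" unfolding gball_def using FT inX by auto
        qed
        ultimately show "s \<in> S" unfolding S_def by blast
      qed
      have inj: "inj_on \<phi> P"
      proof (rule inj_onI, rule ccontr)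
        fix p q assume p: "p \<in> P" and q: "q \<in> P" and eq: "\<phi> p = \<phi> q" and ne: "p \<noteq> q"
        have "path_dist d n p q \<le> R" unfolding path_dist_def
        proof (rule Max.boundedI, simp, simp, clarify)
          fix t assume t: "t \<in> {0..n}"
          define j where "j = t div k"
          define s where "s = j * k"
          have st1: "s \<le> t" unfolding s_def j_def by (metis div_times_less_eq_dividend)
          have "t - s = t mod k" unfolding s_def j_def by (simp add: minus_div_mult_eq_mod)
          then have "t - s \<le> k" using k by (metis less_imp_le mod_less_divisor not_one_le_zero neq0_conv)
          note st = st1 this
          have jJ: "j \<le> J" unfolding j_def J_def using t by (simp add: div_le_mono le_SucI)
          have sn: "min (j * k) n = s" using st t unfolding s_def by auto
          have "F (p s) = F (q s)" using fun_cong[OF eq, of j] jJ sn unfolding \<phi>_def by auto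
          moreover have inX: "p s \<in> X" "q s \<in> X" "p t \<in> X" "q t \<in> X" using pX p q st t by auto
          ultimately have "d (p s) (q s) \<le> M * (real (gd T Eg (F (p s)) (F (p s))) + 1)"
            using gd_FF_lower[of "p s" "q s"] by auto
          also have "\<dots> = M" using gd_refl FT inX by simp
          finally have dsq: "d (p s) (q s) \<le> M" .
          have dp: "d (p s) (p t) \<le> real k * \<delta>"
          proof -
            have "d (p s) (p t) \<le> real (t - s) * \<delta>" using tel p st t by auto
            also have "\<dots> \<le> real k * \<delta>" using st \<delta> by (intro mult_right_mono) auto
            finally show ?thesis .
          qed
          have dq: "d (q s) (q t) \<le> real k * \<delta>"
          proof -
            have "d (q s) (q t) \<le> real (t - s) * \<delta>" using tel q st t by auto
            also have "\<dots> \<le> real k * \<delta>" using st \<delta> by (intro mult_right_mono) auto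
            finally show ?thesis .
          qed
          have "d (p t) (q t) \<le> d (p t) (p s) + d (p s) (q t)" using inX by (intro d_tri) auto
          also have "\<dots> \<le> d (p t) (p s) + (d (p s) (q s) + d (q s) (q t))" using inX by (intro add_left_mono d_tri) auto
          also have "\<dots> \<le> real k * \<delta> + (M + real k * \<delta>)" using dp dq dsq d_com[of "p t" "p s"] by (intro add_mono) auto
          finally show "d (p t) (q t) \<le> R" using R by linarith
        qed
        then show False using Ps p q ne by fastforce
      qed
      have "card P = card (\<phi> ` P)" using card_image[OF inj] by simp
      also have "\<dots> \<le> card S" using card_mono[OF S(1) img] .
      finally show "real (card P) \<le> G ^ (n div k + 1)" using S(2) unfolding J_def
        by (meson of_nat_le_iff order.trans)
    qed
  qed
  then show ?thesis unfolding G_def l_def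
    by (intro ent_ub[OF ms x0 _ _ _]) (use \<delta> k growth_1 in auto)
qed

end


context Gset begin

lemma part_b1:
  assumes gr0: "(\<lambda>l. ln (growth T Eg l) / real l) \<longlonglongrightarrow> 0" and x0: "x0 \<in> X"
  shows "coarse_entropy X d x0 = 0"
proof (rule entropy_zero[of 1], intro allI impI)
  fix \<delta> :: real assume \<delta>1: "1 \<le> \<delta>"
  define k where "k R = nat \<lfloor>(R - M) / (2 * \<delta>)\<rfloor>" for R
  define l where "l R = nat \<lceil>real (k R) * \<delta>\<rceil> + 1" for R
  define g where "g R = ln (growth T Eg (l R)) / real (l R)" for R
  have lim_l: "filterlim l at_top at_top"
    unfolding filterlim_at_top
  proof
    fix Z :: nat
    show "\<forall>\<^sub>F R in at_top. Z \<le> l R"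
    proof (rule eventually_at_top_linorderI[of "M + 2 * \<delta> * real Z"])
      fix R assume R: "M + 2 * \<delta> * real Z \<le> R"
      have "real Z \<le> (R - M) / (2 * \<delta>)" using R \<delta>1 by (simp add: field_simps)
      then have "Z \<le> k R" unfolding k_def by linarith
      moreover have "real (k R) \<le> real (k R) * \<delta>" using mult_left_mono[of 1 \<delta> "real (k R)"] \<delta>1 by simp
      ultimately show "Z \<le> l R" unfolding l_def by linarith
    qed
  qed
  have g0: "(g \<longlongrightarrow> 0) at_top" unfolding g_def
    using filterlim_compose[OF gr0 lim_l] by simp
  have lnG: "ln (growth T Eg j) \<ge> 0" for j using growth_1[of j] by simp
  have ev: "\<forall>\<^sub>F R in at_top. ent X d \<delta> R x0 \<le> ereal ((\<delta> + 2) * g R)"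
  proof (rule eventually_at_top_linorderI[of "M + 2 * \<delta>"])
    fix R assume R: "M + 2 * \<delta> \<le> R"
    have "1 \<le> (R - M) / (2 * \<delta>)" using R \<delta>1 by (simp add: field_simps)
    then have k1: "k R \<ge> 1" unfolding k_def by linarith
    have "real (k R) \<le> (R - M) / (2 * \<delta>)" unfolding k_def using \<open>1 \<le> (R - M) / (2 * \<delta>)\<close> by linarith
    then have kR: "2 * real (k R) * \<delta> + M \<le> R" using \<delta>1 by (simp add: field_simps)
    have "ent X d \<delta> R x0 \<le> ereal (ln (growth T Eg (l R)) / real (k R))"
      using ub_ent[OF x0 _ k1 kR] \<delta>1 unfolding l_def by simp
    also have "ln (growth T Eg (l R)) / real (k R) \<le> (\<delta> + 2) * g R"
    proof -
      have lpos: "real (l R) > 0" unfolding l_def by simp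
      have "real (k R) * \<delta> \<ge> 0" using \<delta>1 by simp
      then have "real (l R) \<le> real (k R) * \<delta> + 2" unfolding l_def by linarith
      also have "\<dots> \<le> real (k R) * (\<delta> + 2)" using k1 by (simp add: algebra_simps)
      finally have lk: "real (l R) \<le> real (k R) * (\<delta> + 2)" .
      have "ln (growth T Eg (l R)) / real (k R) = g R * (real (l R) / real (k R))"
        unfolding g_def using lpos k1 by (simp add: field_simps)
      also have "\<dots> \<le> g R * (\<delta> + 2)"
        using lk k1 lnG lpos unfolding g_def by (intro mult_left_mono) (auto simp: field_simps)
      finally show ?thesis by (simp add: algebra_simps)
    qed
    then have "ereal (ln (growth T Eg (l R)) / real (k R)) \<le> ereal ((\<delta> + 2) * g R)" by simp
    finally show "ent X d \<delta> R x0 \<le> ereal ((\<delta> + 2) * g R)" .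
  qed
  have up: "((\<lambda>R. ereal ((\<delta> + 2) * g R)) \<longlongrightarrow> 0) at_top"
  proof -
    have "((\<lambda>R. (\<delta> + 2) * g R) \<longlongrightarrow> (\<delta> + 2) * 0) at_top" by (intro tendsto_mult tendsto_const g0)
    then have "((\<lambda>R. ereal ((\<delta> + 2) * g R)) \<longlongrightarrow> ereal 0) at_top" by (intro tendsto_ereal) simp
    then show ?thesis by (simp add: zero_ereal_def)
  qed
  have lo: "\<forall>\<^sub>F R in at_top. 0 \<le> ent X d \<delta> R x0" using ent_nonneg[OF ms x0] \<delta>1 by simp
  show "((\<lambda>R. ent X d \<delta> R x0) \<longlongrightarrow> 0) at_top"
    by (rule tendsto_sandwich[OF lo ev tendsto_const up])
qed

end


lemma max_sep:
  fixes f :: "'b \<Rightarrow> 'b \<Rightarrow> real"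
  assumes refl: "\<forall>x\<in>S. f x x \<le> r"
  shows "\<exists>Q\<subseteq>S. rsep f r Q \<and> (\<forall>x\<in>S. \<exists>y\<in>Q. f x y \<le> r \<or> f y x \<le> r)"
proof -
  define \<A> where "\<A> = {Y. Y \<subseteq> S \<and> rsep f r Y}"
  have "\<exists>M\<in>\<A>. \<forall>Y\<in>\<A>. M \<subseteq> Y \<longrightarrow> Y = M"
  proof (rule subset_Zorn')
    fix Ch assume ch: "subset.chain \<A> Ch"
    show "\<Union> Ch \<in> \<A>" unfolding \<A>_def rsep_def
    proof safe
      fix a b Ya Yb assume "a \<in> Ya" "Ya \<in> Ch" "b \<in> Yb" "Yb \<in> Ch" "a \<noteq> b"
      from ch \<open>Ya \<in> Ch\<close> \<open>Yb \<in> Ch\<close> have "Ya \<subseteq> Yb \<or> Yb \<subseteq> Ya" by (auto simp: subset_chain_def)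
      moreover have "Ya \<in> \<A>" "Yb \<in> \<A>" using ch \<open>Ya \<in> Ch\<close> \<open>Yb \<in> Ch\<close> by (auto simp: subset_chain_def)
      ultimately obtain Y where Y: "Y \<in> \<A>" "a \<in> Y" "b \<in> Y" using \<open>a \<in> Ya\<close> \<open>b \<in> Yb\<close> by blast
      then have "rsep f r Y" unfolding \<A>_def by simp
      then show "r < f a b" using Y \<open>a \<noteq> b\<close> unfolding rsep_def by simp
    next
      fix a Y assume "a \<in> Y" "Y \<in> Ch"
      then show "a \<in> S" using ch by (auto simp: subset_chain_def \<A>_def)
    qed
  qed
  then obtain Q where QA: "Q \<in> \<A>" and Qmax: "\<forall>Y\<in>\<A>. Q \<subseteq> Y \<longrightarrow> Y = Q" by blast
  have QS: "Q \<subseteq> S" and Qsep: "rsep f r Q" using QA unfolding \<A>_def by auto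
  have "\<exists>y\<in>Q. f x y \<le> r \<or> f y x \<le> r" if x: "x \<in> S" for x
  proof (rule ccontr)
    assume "\<not> (\<exists>y\<in>Q. f x y \<le> r \<or> f y x \<le> r)"
    then have far: "\<forall>y\<in>Q. f x y > r" and far': "\<forall>y\<in>Q. f y x > r" by auto
    then have "x \<notin> Q" using refl x by force
    have "rsep f r (insert x Q)" unfolding rsep_def
    proof (intro ballI impI)
      fix a b assume "a \<in> insert x Q" "b \<in> insert x Q" "a \<noteq> b"
      then consider "a = x" "b \<in> Q" | "b = x" "a \<in> Q" | "a \<in> Q" "b \<in> Q" by auto
      then show "r < f a b"
      proof cases
        case 3 then show ?thesis using Qsep \<open>a \<noteq> b\<close> unfolding rsep_def by simp
      qed (use far far' in auto)
    qed
    then have "insert x Q \<in> \<A>" unfolding \<A>_def using x QS by auto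
    then have "insert x Q = Q" using Qmax by blast
    then show False using \<open>x \<notin> Q\<close> by auto
  qed
  then show ?thesis using QS Qsep by blast
qed


context Gset begin

lemma lb_ent:
  assumes x0: "x0 \<in> X" and \<delta>: "\<delta> > A" and R: "R \<ge> 0" and c: "c > 0"
    and l1: "real l \<ge> 3 + 2 * ((\<delta> - A) / C) / M"
    and l2: "c * real l / 2 \<ge> ln 2 + ln (growth T Eg (nat \<lceil>R\<rceil> + 3))"
    and l3: "ln (growth T Eg l) / real l > c" and l0: "l > 0"
  shows "ereal (c * ((\<delta> - A) / C) / (8 * M)) \<le> ent X d \<delta> R x0"
proof -
  define h where "h = (\<delta> - A) / C"
  define s where "s = nat \<lceil>R\<rceil> + 3"
  define Gs where "Gs = growth T Eg s"
  have h: "h > 0" unfolding h_def using \<delta> CA by simp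
  have Gs1: "Gs \<ge> 1" unfolding Gs_def by (rule growth_1)
  have M1: "M \<ge> 1" by (rule M)
  obtain v where v: "v \<in> T" and big: "growth T Eg l / 2 < real (card (gball T Eg v (real l)))"
    using growth_big by blast
  define Ball where "Ball = gball T Eg v (real l)"
  have Bfin: "finite Ball" unfolding Ball_def using gball_fin[OF v] .
  have BT: "Ball \<subseteq> T" unfolding Ball_def gball_def by auto
  define f where "f u w = real (gd T Eg u w)" for u w
  have "\<forall>x\<in>Ball. f x x \<le> real s"
  proof
    fix x assume "x \<in> Ball"
    then have "x \<in> T" using BT by auto
    then show "f x x \<le> real s" unfolding f_def using gd_refl[of x T Eg] by simp
  qed
  from max_sep[of Ball f "real s", OF this] obtain Q where QB: "Q \<subseteq> Ball" and Qsep: "rsep f (real s) Q"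
    and cov: "\<forall>x\<in>Ball. \<exists>y\<in>Q. f x y \<le> real s \<or> f y x \<le> real s"
    by blast
  have Qfin: "finite Q" using finite_subset[OF QB Bfin] .
  have cover: "Ball \<subseteq> (\<Union>q\<in>Q. gball T Eg q (real s))"
  proof
    fix w assume w: "w \<in> Ball"
    then obtain q where q: "q \<in> Q" "f w q \<le> real s \<or> f q w \<le> real s" using cov by blast
    have "q \<in> T" "w \<in> T" using q QB BT w by auto
    then have "gd T Eg q w = gd T Eg w q" using gd_sym[OF sg conn] by simp
    then have "gdist T Eg q w \<le> real s" using q unfolding f_def gdist_gd by auto
    then show "w \<in> (\<Union>q\<in>Q. gball T Eg q (real s))" using q \<open>w \<in> T\<close> unfolding gball_def by auto
  qed
  have QT: "q \<in> T" if "q \<in> Q" for q using that QB BT by auto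
  have finU: "finite (\<Union>q\<in>Q. gball T Eg q (real s))"
    by (intro finite_UN_I Qfin gball_fin QT)
  have c1: "card Ball \<le> card (\<Union>q\<in>Q. gball T Eg q (real s))" by (rule card_mono[OF finU cover])
  have c2: "card (\<Union>q\<in>Q. gball T Eg q (real s)) \<le> (\<Sum>q\<in>Q. card (gball T Eg q (real s)))"
    by (rule card_UN_le[OF Qfin])
  have "real (card Ball) \<le> real (\<Sum>q\<in>Q. card (gball T Eg q (real s)))"
    using c1 c2 by linarith
  also have "\<dots> = (\<Sum>q\<in>Q. real (card (gball T Eg q (real s))))" by (rule of_nat_sum)
  also have "\<dots> \<le> (\<Sum>q\<in>Q. Gs)" unfolding Gs_def by (intro sum_mono growth_ge QT)
  also have "\<dots> = real (card Q) * Gs" by simp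
  finally have cB: "real (card Ball) \<le> real (card Q) * Gs" .
  define N where "N = card Q"
  have gl1: "growth T Eg l \<ge> 1" by (rule growth_1)
  have "growth T Eg l / 2 < real N * Gs" using big cB unfolding Ball_def N_def by linarith
  then have "real N * Gs > 0" using gl1 by linarith
  then have N0: "real N > 0" using Gs1 by (simp add: zero_less_mult_iff)
  have "ln (growth T Eg l / 2) < ln (real N * Gs)" using \<open>growth T Eg l / 2 < real N * Gs\<close> gl1
    by (intro ln_less_cancel_iff[THEN iffD2]) auto
  then have "ln (growth T Eg l) - ln 2 < ln (real N) + ln Gs" using gl1 Gs1 N0 by (simp add: ln_div ln_mult)
  moreover have "ln (growth T Eg l) > c * real l" using l3 l0 by (simp add: field_simps)
  ultimately have lnN: "ln (real N) \<ge> c * real l / 2" using l2 unfolding Gs_def s_def by linarith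
  define Z where "Z = pre ` Q"
  have preX: "pre w \<in> X" if "w \<in> Q" for w using pre that QB BT by auto
  have sepX: "d (pre w) (pre w') > R" if w: "w \<in> Q" "w' \<in> Q" "w \<noteq> w'" for w w'
  proof -
    have wT: "w \<in> T" "w' \<in> T" using w QB BT by auto
    have "real (gd T Eg w w') > real s" using Qsep w unfolding rsep_def f_def by auto
    have "gd T Eg w w' \<le> gd T Eg w (F (pre w)) + gd T Eg (F (pre w)) w'"
      using wT FT preX w by (intro gd_tri[OF conn]) auto
    also have "\<dots> \<le> gd T Eg w (F (pre w)) + (gd T Eg (F (pre w)) (F (pre w')) + gd T Eg (F (pre w')) w')"
      using wT FT preX w by (intro add_left_mono gd_tri[OF conn]) auto
    finally have "real (gd T Eg w w') \<le> 1 + (d (pre w) (pre w') + 1 + 1)"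
      using gd_pre[OF wT(1)] gd_pre'[OF wT(2)] gd_FF_upper[OF preX[OF w(1)] preX[OF w(2)]] by linarith
    moreover have "real s \<ge> R + 3" unfolding s_def by linarith
    ultimately show ?thesis using \<open>real (gd T Eg w w') > real s\<close> by linarith
  qed
  have injpre: "inj_on pre Q"
  proof (rule inj_onI, rule ccontr)
    fix w w' assume "w \<in> Q" "w' \<in> Q" "pre w = pre w'" "w \<noteq> w'"
    then show False using sepX[of w w'] d_zero preX R by auto
  qed
  have cZ: "card Z = N" unfolding Z_def N_def using card_image[OF injpre] .
  define \<rho> where "\<rho> = M * (real l + 3)"
  have vX: "pre v \<in> X" using pre[OF v] by auto
  have rad: "d (pre v) z \<le> \<rho>" if z: "z \<in> Z" for z
  proof -
    obtain w where w: "w \<in> Q" "z = pre w" using z unfolding Z_def by auto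
    have wT: "w \<in> T" using w QB BT by auto
    have gvw: "gd T Eg v w \<le> l" using w QB unfolding Ball_def gball_def gdist_gd by auto
    have "gd T Eg (F (pre v)) (F (pre w)) \<le> gd T Eg (F (pre v)) v + gd T Eg v (F (pre w))"
      using v wT FT preX w vX by (intro gd_tri[OF conn]) auto
    also have "\<dots> \<le> gd T Eg (F (pre v)) v + (gd T Eg v w + gd T Eg w (F (pre w)))"
      using v wT FT preX w vX by (intro add_left_mono gd_tri[OF conn]) auto
    finally have "real (gd T Eg (F (pre v)) (F (pre w))) \<le> real l + 2"
      using gd_pre[OF wT] gd_pre'[OF v] gvw by linarith
    then have "M * (real (gd T Eg (F (pre v)) (F (pre w))) + 1) \<le> M * (real l + 2 + 1)"
      using M1 by (intro mult_left_mono) auto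
    then have "d (pre v) (pre w) \<le> M * (real l + 2 + 1)"
      using gd_FF_lower[OF vX preX[OF w(1)]] by linarith
    then show ?thesis unfolding \<rho>_def w by (simp add: algebra_simps)
  qed
  have ZX: "Z \<subseteq> X" unfolding Z_def using preX by auto
  have Zf: "finite Z" unfolding Z_def using Qfin by simp
  have Z1: "card Z \<ge> 1" using cZ N0 by simp
  have Zsep: "\<forall>z\<in>Z. \<forall>z'\<in>Z. z \<noteq> z' \<longrightarrow> d z z' > R" unfolding Z_def using sepX by auto
  have E: "ereal (ln (real (card Z)) / real (2 * (nat \<lceil>\<rho> / ((\<delta> - A) / C)\<rceil> + 1))) \<le> ent X d \<delta> R x0"
    by (rule many_points_ent[OF ms q x0 vX Zf ZX Z1 _ Zsep R \<delta>]) (use rad in auto)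
  define L where "L = nat \<lceil>\<rho> / h\<rceil> + 1"
  have \<rho>0: "\<rho> \<ge> 0" unfolding \<rho>_def using M1 by simp
  have \<rho>h: "\<rho> / h \<ge> 0" using \<rho>0 h by simp
  have L: "real L \<le> \<rho> / h + 2" unfolding L_def using \<rho>h by linarith
  have Lpos: "real L > 0" unfolding L_def by simp
  have M0: "M > 0" using M1 by simp
  have key: "c * h / (8 * M) * (2 * real L) \<le> c * real l / 2"
  proof -
    have "real L * h \<le> (\<rho> / h + 2) * h" using L h by (intro mult_right_mono) auto
    also have "(\<rho> / h + 2) * h = \<rho> + 2 * h" using h by (simp add: field_simps)
    finally have a: "2 * real L * h \<le> 2 * \<rho> + 4 * h" by linarith
    have b: "2 * real L * h / (8 * M) \<le> (2 * \<rho> + 4 * h) / (8 * M)" using a M0 by (intro divide_right_mono) auto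
    have c': "(2 * \<rho> + 4 * h) / (8 * M) = (real l + 3) / 4 + h / (2 * M)" unfolding \<rho>_def using M0 by (simp add: field_simps)
    define t where "t = 2 * h / M"
    have d': "h / (2 * M) = t / 4" unfolding t_def using M0 by (simp add: field_simps)
    have e': "t \<le> real l - 3" using l1 unfolding h_def t_def by simp
    have "(real l + 3) / 4 + h / (2 * M) \<le> real l / 2" unfolding d' using e' by (simp add: field_simps)
    then have "2 * real L * h / (8 * M) \<le> real l / 2" using b c' by linarith
    then have "c * (2 * real L * h / (8 * M)) \<le> c * (real l / 2)" using c by (intro mult_left_mono) auto
    moreover have "c * h / (8 * M) * (2 * real L) = c * (2 * real L * h / (8 * M))" by simp
    moreover have "c * (real l / 2) = c * real l / 2" by simp
    ultimately show ?thesis by linarith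
  qed
  have "c * h / (8 * M) * (2 * real L) \<le> ln (real N)" using key lnN by linarith
  then have "c * h / (8 * M) \<le> ln (real N) / (2 * real L)" using Lpos by (simp add: pos_le_divide_eq)
  then have "ereal (c * h / (8 * M)) \<le> ereal (ln (real (card Z)) / real (2 * L))" using cZ by simp
  also have "\<dots> \<le> ent X d \<delta> R x0" using E unfolding L_def h_def .
  finally show ?thesis unfolding h_def .
qed

end


context Gset begin

lemma part_b2:
  assumes gl: "limsup (\<lambda>l. ereal (ln (growth T Eg l) / real l)) > 0" and x0: "x0 \<in> X"
  shows "coarse_entropy X d x0 = \<infinity>"
proof -
  obtain c where c0: "0 < ereal c" and cl: "ereal c < limsup (\<lambda>l. ereal (ln (growth T Eg l) / real l))"
    using ereal_dense2[OF gl] by blast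
  have c: "c > 0" using c0 by simp
  have freq: "\<exists>l\<ge>l0. ln (growth T Eg l) / real l > c" for l0
  proof (rule ccontr)
    assume "\<not> (\<exists>l\<ge>l0. ln (growth T Eg l) / real l > c)"
    then have "\<forall>l\<ge>l0. ereal (ln (growth T Eg l) / real l) \<le> ereal c" by auto
    then have "limsup (\<lambda>l. ereal (ln (growth T Eg l) / real l)) \<le> ereal c"
      by (intro Limsup_bounded eventually_sequentiallyI) auto
    then show False using cl by simp
  qed
  have M0: "M > 0" using M(1) by simp
  have C0: "C > 0" using CA by simp
  show ?thesis
  proof (rule entropy_inf2[OF ms x0, of "A + 1" "\<lambda>\<delta>. c * ((\<delta> - A) / C) / (8 * M)" 0])
    show "0 \<le> A + 1" using CA by simp
    show "filterlim (\<lambda>\<delta>. c * ((\<delta> - A) / C) / (8 * M)) at_top at_top"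
      unfolding filterlim_at_top
    proof
      fix Z :: real
      show "\<forall>\<^sub>F \<delta> in at_top. Z \<le> c * ((\<delta> - A) / C) / (8 * M)"
      proof (rule eventually_at_top_linorderI[of "A + 8 * M * C * \<bar>Z\<bar> / c"])
        fix \<delta> assume \<delta>: "A + 8 * M * C * \<bar>Z\<bar> / c \<le> \<delta>"
        have "8 * M * C * \<bar>Z\<bar> / c \<le> \<delta> - A" using \<delta> by simp
        then have "8 * M * C * \<bar>Z\<bar> \<le> c * (\<delta> - A)" using c by (simp add: pos_divide_le_eq mult.commute)
        then have "\<bar>Z\<bar> \<le> c * (\<delta> - A) / (8 * M * C)" using M0 C0 by (simp add: pos_le_divide_eq mult.commute)
        also have "\<dots> = c * ((\<delta> - A) / C) / (8 * M)" by simp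
        finally show "Z \<le> c * ((\<delta> - A) / C) / (8 * M)" by linarith
      qed
    qed
    show "\<forall>\<delta>\<ge>A + 1. \<forall>R\<ge>0. ereal (c * ((\<delta> - A) / C) / (8 * M)) \<le> ent X d \<delta> R x0"
    proof (intro allI impI)
      fix \<delta> R :: real assume \<delta>: "A + 1 \<le> \<delta>" and R: "0 \<le> R"
      define Gs where "Gs = growth T Eg (nat \<lceil>R\<rceil> + 3)"
      define y1 where "y1 = 3 + 2 * ((\<delta> - A) / C) / M"
      define y2 where "y2 = 2 * (ln 2 + ln Gs) / c"
      obtain l where l: "l \<ge> nat \<lceil>y1\<rceil> + nat \<lceil>y2\<rceil> + 1" and l3: "ln (growth T Eg l) / real l > c"
        using freq by blast
      have l1: "real l \<ge> y1" using l by linarith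
      have "real l \<ge> y2" using l by linarith
      then have "c * real l \<ge> c * y2" using c by (intro mult_left_mono) auto
      also have "c * y2 = 2 * (ln 2 + ln Gs)" unfolding y2_def using c by simp
      finally have l2: "c * real l / 2 \<ge> ln 2 + ln Gs" by simp
      show "ereal (c * ((\<delta> - A) / C) / (8 * M)) \<le> ent X d \<delta> R x0"
        by (rule lb_ent[OF x0 _ R c]) (use \<delta> l1 l2 l3 l in \<open>auto simp: y1_def Gs_def\<close>)
    qed
  qed
qed

end


theorem mainTheorem20:
  fixes X :: "'a set" and d :: "'a \<Rightarrow> 'a \<Rightarrow> real"
  assumes "Metric_space X d" and "X \<noteq> {}" and "quasigeodesic X d"
  shows "(\<not> coarsely_bounded_geometry X d \<longrightarrow> (\<forall>x0\<in>X. coarse_entropy X d x0 = \<infinity>)) \<and>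
         (coarsely_bounded_geometry X d \<longrightarrow>
            (\<exists>V E. simple_graph V E \<and> graph_connected V E \<and> bounded_degree V E \<and>
               quasi_isometric X d V (gdist V E) \<and>
               ((\<lambda>l. ln (growth V E l) / real l) \<longlonglongrightarrow> 0 \<longrightarrow> (\<forall>x0\<in>X. coarse_entropy X d x0 = 0)) \<and>
               (limsup (\<lambda>l. ereal (ln (growth V E l) / real l)) > 0 \<longrightarrow>
                  (\<forall>x0\<in>X. coarse_entropy X d x0 = \<infinity>))))"
proof -
  note ms = assms(1) and ne = assms(2)
  obtain C A where q: "qg C A X d" using assms(3) unfolding quasigeodesic_qg by blast
  have part1: "\<not> coarsely_bounded_geometry X d \<longrightarrow> (\<forall>x0\<in>X. coarse_entropy X d x0 = \<infinity>)"
    using part_a[OF ms ne q] by blast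
  have part2: "coarsely_bounded_geometry X d \<longrightarrow>
            (\<exists>V E. simple_graph V E \<and> graph_connected V E \<and> bounded_degree V E \<and>
               quasi_isometric X d V (gdist V E) \<and>
               ((\<lambda>l. ln (growth V E l) / real l) \<longlonglongrightarrow> 0 \<longrightarrow> (\<forall>x0\<in>X. coarse_entropy X d x0 = 0)) \<and>
               (limsup (\<lambda>l. ereal (ln (growth V E l) / real l)) > 0 \<longrightarrow>
                  (\<forall>x0\<in>X. coarse_entropy X d x0 = \<infinity>)))"
  proof
    assume "coarsely_bounded_geometry X d"
    then obtain T :: "nat set" and e F where mT: "Metric_space T e" and bg: "bounded_geometry T e"
      and ce: "coarse_equivalence X d T e F"
      unfolding coarsely_bounded_geometry_def by blast
    from ce have FX: "F ` X \<subseteq> T" unfolding coarse_equivalence_def by blast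
    from ce obtain \<rho>m \<rho>p where rho: "mono \<rho>m" "mono \<rho>p" "filterlim \<rho>m at_top at_top"
      "\<forall>x\<in>X. \<forall>x'\<in>X. \<rho>m (d x x') \<le> e (F x) (F x') \<and> e (F x) (F x') \<le> \<rho>p (d x x')"
      unfolding coarse_equivalence_def by blast
    from ce obtain RT where dense: "\<forall>y\<in>T. \<exists>x\<in>X. e y (F x) \<le> RT"
      unfolding coarse_equivalence_def by blast
    interpret G: Gset X d T e F \<rho>m \<rho>p RT C A
      by (rule Gset.intro[OF ms ne q mT bg FX rho(1) rho(2) rho(3) rho(4) dense])
    show "\<exists>V E. simple_graph V E \<and> graph_connected V E \<and> bounded_degree V E \<and>
               quasi_isometric X d V (gdist V E) \<and>
               ((\<lambda>l. ln (growth V E l) / real l) \<longlonglongrightarrow> 0 \<longrightarrow> (\<forall>x0\<in>X. coarse_entropy X d x0 = 0)) \<and>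
               (limsup (\<lambda>l. ereal (ln (growth V E l) / real l)) > 0 \<longrightarrow>
                  (\<forall>x0\<in>X. coarse_entropy X d x0 = \<infinity>))"
      by (intro exI[of _ T] exI[of _ G.Eg] conjI G.sg G.graph_conn G.bdeg G.qi impI ballI G.part_b1 G.part_b2)
  qed
  show ?thesis using part1 part2 by blast
qed


end
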